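(* Let $\Omega\subset\mathbb{R}^N$ ($N\geq 2$) be a bounded Lipschitz open set and fix $s_0\in[1/2,1)$. Then $\limsup_{s\searrow s_0}S_{N,s}(\Omega)\leq S_{N,s_0}(\Omega)$.
   Context: For $s\in(0,1)$: $c_{N,s}$ is the standard normalization constant of the fractional Laplacian on $\mathbb{R}^N$, $2^*_s=\frac{2N}{N-2s}$, $Q_{N,s,\Omega}(u)=\frac{c_{N,s}}{2}\int_\Omega\int_\Omega\frac{(u(x)-u(y))^2}{|x-y|^{N+2s}}dxdy$, $H^s_0(\Omega)$ is the completion of $C^\infty_c(\Omega)$ in the norm $(\|u\|^2_{L^2(\Omega)}+Q_{N,s,\Omega}(u))^{1/2}$, and $S_{N,s}(\Omega)=\inf_{u\in H^s_0(\Omega),u\neq0}\frac{Q_{N,s,\Omega}(u)}{\|u\|^2_{L^{2^*_s}(\Omega)}}$. Lipschitz open set: each boundary point has a neighbourhood described by a bi-Lipschitz map from a cylinder $B_r\times(-r,r)$ ($B_r$ an $(N-1)$-ball) sending the upper half into $\Omega$ and the flat part into $\partial\Omega$. *)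

theory Defs
  imports "HOL-Analysis.Analysis"
begin

fun iter_pd :: "'a::euclidean_space list \<Rightarrow> ('a \<Rightarrow> real) \<Rightarrow> ('a \<Rightarrow> real)" where
  "iter_pd [] f = f"
| "iter_pd (b # bs) f = (\<lambda>x. deriv (\<lambda>t. iter_pd bs f (x + t *\<^sub>R b)) 0)"

definition smooth_fun :: "('a::euclidean_space \<Rightarrow> real) \<Rightarrow> bool" where
  "smooth_fun f \<longleftrightarrow>
     (\<forall>bs. set bs \<subseteq> Basis \<longrightarrow>
        continuous_on UNIV (iter_pd bs f) \<and>
        (\<forall>b\<in>Basis. \<forall>x. (\<lambda>t. iter_pd bs f (x + t *\<^sub>R b)) differentiable (at 0)))"

definition Cc_inf :: "'a::euclidean_space set \<Rightarrow> ('a \<Rightarrow> real) \<Rightarrow> bool" where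
  "Cc_inf \<Omega> f \<longleftrightarrow> smooth_fun f \<and> compact (closure {x. f x \<noteq> 0}) \<and> closure {x. f x \<noteq> 0} \<subseteq> \<Omega>"

definition c_const :: "nat \<Rightarrow> real \<Rightarrow> real" where
  "c_const N s = s * 2 powr (2 * s) * Gamma ((real N + 2 * s) / 2) / (pi powr (real N / 2) * Gamma (1 - s))"

definition crit_exp :: "nat \<Rightarrow> real \<Rightarrow> real" where
  "crit_exp N s = 2 * real N / (real N - 2 * s)"

definition Qform :: "real \<Rightarrow> 'a::euclidean_space set \<Rightarrow> ('a \<Rightarrow> real) \<Rightarrow> ennreal" where
  "Qform s \<Omega> u = ennreal (c_const DIM('a) s / 2) *
     (\<integral>\<^sup>+ x. (\<integral>\<^sup>+ y. ennreal ((u x - u y)\<^sup>2 / norm (x - y) powr (real DIM('a) + 2 * s))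
        * indicator \<Omega> y \<partial>lebesgue) * indicator \<Omega> x \<partial>lebesgue)"

definition Hs0 :: "real \<Rightarrow> 'a::euclidean_space set \<Rightarrow> ('a \<Rightarrow> real) set" where
  "Hs0 s \<Omega> = {u. u \<in> borel_measurable lebesgue \<and>
     (\<exists>\<phi>. (\<forall>n. Cc_inf \<Omega> (\<phi> n)) \<and>
        ((\<lambda>n. (\<integral>\<^sup>+ x. ennreal ((\<phi> n x - u x)\<^sup>2) * indicator \<Omega> x \<partial>lebesgue)
              + Qform s \<Omega> (\<lambda>x. \<phi> n x - u x)) \<longlonglongrightarrow> 0))}"

definition Lp_norm_sq :: "real \<Rightarrow> 'a::euclidean_space set \<Rightarrow> ('a \<Rightarrow> real) \<Rightarrow> real" where
  "Lp_norm_sq p \<Omega> u = (enn2real (\<integral>\<^sup>+ x. ennreal (\<bar>u x\<bar> powr p) * indicator \<Omega> x \<partial>lebesgue)) powr (2 / p)"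

definition S_const :: "real \<Rightarrow> 'a::euclidean_space set \<Rightarrow> ennreal" where
  "S_const s \<Omega> = (INF u \<in> {u \<in> Hs0 s \<Omega>. \<not> (AE x in lebesgue. x \<in> \<Omega> \<longrightarrow> u x = 0)}.
       Qform s \<Omega> u / ennreal (Lp_norm_sq (crit_exp DIM('a) s) \<Omega> u))"

(* fixed splitting R^N = R^{N-1} x R along the basis vector e_N *)
definition eN :: "'a::euclidean_space" where
  "eN = (SOME b. b \<in> (Basis :: 'a set))"

definition cylinder :: "real \<Rightarrow> 'a::euclidean_space set" where
  "cylinder r = {y::'a. norm (y - (y \<bullet> eN) *\<^sub>R eN) < r \<and> \<bar>y \<bullet> eN\<bar> < r}"

definition lipschitz_open_set :: "'a::euclidean_space set \<Rightarrow> bool" where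
  "lipschitz_open_set \<Omega> \<longleftrightarrow> open \<Omega> \<and>
    (\<forall>p \<in> frontier \<Omega>. \<exists>r (T :: 'a \<Rightarrow> 'a) L. r > 0 \<and>
       inj_on T (cylinder r) \<and>
       L-lipschitz_on (cylinder r) T \<and>
       L-lipschitz_on (T ` cylinder r) (inv_into (cylinder r) T) \<and>
       open (T ` cylinder r) \<and> p \<in> T ` cylinder r \<and>
       T ` (cylinder r \<inter> {y. y \<bullet> eN > 0}) = T ` cylinder r \<inter> \<Omega> \<and>
       T ` (cylinder r \<inter> {y. y \<bullet> eN = 0}) = T ` cylinder r \<inter> frontier \<Omega>)"

end

theory Submission
  imports Defs
begin



lemma ennreal_term_le_suminf: "(f::nat \<Rightarrow> ennreal) k \<le> suminf f"
proof -
  have "sum f {k} \<le> suminf f"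
    by (rule sum_le_suminf) auto
  then show ?thesis by simp
qed

lemma exists_dyadic:
  fixes d R :: real
  assumes "0 < d" "d < R"
  shows "\<exists>k. R / 2 ^ Suc k \<le> d \<and> d < R / 2 ^ k"
proof -
  obtain n where n: "R / d < 2 ^ n"
    using real_arch_pow[of 2 "R/d"] by auto
  then have ex: "R / 2 ^ n \<le> d"
    using assms by (simp add: field_simps)
  define m where "m = (LEAST n. R / 2 ^ n \<le> d)"
  have m1: "R / 2 ^ m \<le> d" unfolding m_def by (rule LeastI[of "\<lambda>n. R / 2^n \<le> d", OF ex])
  have m0: "m \<noteq> 0"
  proof
    assume "m = 0"
    then have "R \<le> d" using m1 by simp
    then show False using assms by simp
  qed
  then obtain k where k: "m = Suc k" using not0_implies_Suc by blast
  have "\<not> R / 2 ^ k \<le> d"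
    using not_less_Least[of k "\<lambda>n. R / 2 ^ n \<le> d"] k unfolding m_def by auto
  then show ?thesis using m1 k by (intro exI[of _ k]) auto
qed

lemma sing_bound:
  fixes x :: "'a::euclidean_space"
  assumes "0 \<le> \<alpha>" "R > 0"
  shows "(\<integral>\<^sup>+ y. ennreal (norm (x - y) powr (-\<alpha>)) * indicator (ball x R) y \<partial>lborel)
    \<le> (\<Sum>k. ennreal ((R / 2^Suc k) powr (-\<alpha>) * (unit_ball_vol DIM('a) * (R/2^k)^DIM('a))))"
proof -
  have pt: "ennreal (norm (x - y) powr (-\<alpha>)) * indicator (ball x R) y
      \<le> (\<Sum>k. ennreal ((R/2^Suc k) powr (-\<alpha>)) * indicator (ball x (R/2^k)) y)" for y
  proof (cases "y \<in> ball x R \<and> y \<noteq> x")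
    case False
    then show ?thesis by (auto simp: indicator_def)
  next
    case True
    define d where "d = dist x y"
    have d: "0 < d" "d < R" using True by (auto simp: d_def)
    obtain k where k: "R / 2 ^ Suc k \<le> d" "d < R / 2 ^ k"
      using exists_dyadic[OF d] by blast
    have pos: "0 < R / 2 ^ Suc k" using assms by simp
    have "ennreal (norm (x - y) powr (-\<alpha>)) * indicator (ball x R) y = ennreal (d powr (-\<alpha>))"
      using True by (simp add: d_def dist_norm)
    also have "\<dots> \<le> ennreal ((R/2^Suc k) powr (-\<alpha>))"
      using k pos assms by (intro ennreal_leI powr_mono2') auto
    also have "\<dots> = ennreal ((R/2^Suc k) powr (-\<alpha>)) * indicator (ball x (R/2^k)) y"
      using k by (simp add: d_def)
    also have "\<dots> \<le> (\<Sum>k. ennreal ((R/2^Suc k) powr (-\<alpha>)) * indicator (ball x (R/2^k)) y)"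
      by (rule ennreal_term_le_suminf[where f="\<lambda>k. ennreal ((R/2^Suc k) powr (-\<alpha>)) * indicator (ball x (R/2^k)) y"])
    finally show ?thesis .
  qed
  have "(\<integral>\<^sup>+ y. ennreal (norm (x - y) powr (-\<alpha>)) * indicator (ball x R) y \<partial>lborel)
     \<le> (\<integral>\<^sup>+ y. (\<Sum>k. ennreal ((R/2^Suc k) powr (-\<alpha>)) * indicator (ball x (R/2^k)) y) \<partial>lborel)"
    by (intro nn_integral_mono pt)
  also have "\<dots> = (\<Sum>k. \<integral>\<^sup>+ y. ennreal ((R/2^Suc k) powr (-\<alpha>)) * indicator (ball x (R/2^k)) y \<partial>lborel)"
  proof -
    have meas: "\<And>k. (\<lambda>y. ennreal ((R/2^Suc k) powr (-\<alpha>)) * indicator (ball x (R/2^k)) y) \<in> borel_measurable lborel"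
      by (intro borel_measurable_times_ennreal borel_measurable_const borel_measurable_indicator) auto
    show ?thesis by (rule nn_integral_suminf[OF meas])
  qed
  also have "\<dots> = (\<Sum>k. ennreal ((R / 2^Suc k) powr (-\<alpha>) * (unit_ball_vol DIM('a) * (R/2^k)^DIM('a))))"
  proof (intro suminf_cong)
    fix k
    have "R / 2 ^ k \<ge> 0" using assms by simp
    then show "(\<integral>\<^sup>+ y. ennreal ((R/2^Suc k) powr (-\<alpha>)) * indicator (ball x (R/2^k)) y \<partial>lborel)
      = ennreal ((R / 2^Suc k) powr (-\<alpha>) * (unit_ball_vol DIM('a) * (R/2^k)^DIM('a)))"
    proof -
      have "(\<integral>\<^sup>+ y. ennreal ((R/2^Suc k) powr (-\<alpha>)) * indicator (ball x (R/2^k)) y \<partial>lborel)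
          = ennreal ((R/2^Suc k) powr (-\<alpha>)) * emeasure lborel (ball x (R/2^k))"
        by (rule nn_integral_cmult_indicator) simp
      also have "\<dots> = ennreal ((R/2^Suc k) powr (-\<alpha>)) * ennreal (unit_ball_vol DIM('a) * (R/2^k)^DIM('a))"
        using emeasure_ball[OF \<open>R / 2 ^ k \<ge> 0\<close>, of x] by simp
      also have "\<dots> = ennreal ((R / 2^Suc k) powr (-\<alpha>) * (unit_ball_vol DIM('a) * (R/2^k)^DIM('a)))"
        by (rule ennreal_mult'[symmetric]) simp
      finally show ?thesis .
    qed
  qed
  finally show ?thesis .
qed


lemma sing_series_finite:
  assumes "0 \<le> \<alpha>" "\<alpha> < real N" "R > 0" and that: "V \<ge> 0"
  shows "(\<Sum>k. ennreal ((R / 2^Suc k) powr (-\<alpha>) * (V * (R/2^k)^N))) < \<infinity>"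
proof -
  define q where "q = 2 powr (\<alpha> - real N)"
  have q: "0 < q" "q < 1" using assms by (auto simp: q_def powr_less_one)
  have p2: "(2::real) ^ n = 2 powr real n" for n
    by (simp add: powr_realpow)
  have eq: "(R / 2^Suc k) powr (-\<alpha>) * (V * (R/2^k)^N) = (R powr (-\<alpha>) * 2 powr \<alpha> * V * R ^ N) * q ^ k" for k
  proof -
    have a: "(R / 2^Suc k) powr (-\<alpha>) = R powr (-\<alpha>) * 2 powr (\<alpha> * (real k + 1))"
    proof -
      have "(R / 2^Suc k) powr (-\<alpha>) = R powr (-\<alpha>) / (2 powr real (Suc k)) powr (-\<alpha>)"
        unfolding p2 using assms by (auto intro: powr_divide)
      also have "(2 powr real (Suc k)) powr (-\<alpha>) = 2 powr (- (\<alpha> * (real k + 1)))"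
        by (simp add: powr_powr algebra_simps)
      also have "2 powr (- (\<alpha> * (real k + 1))) = inverse (2 powr (\<alpha> * (real k + 1)))"
        by (rule powr_minus)
      finally show ?thesis by (simp only: divide_inverse inverse_inverse_eq)
    qed
    have b: "(R/2^k)^N = R ^ N * 2 powr (- (real N * k))"
    proof -
      have "(R/2^k)^N = R ^ N / (2 powr real k) ^ N" unfolding p2[of k] by (rule power_divide)
      also have "(2 powr real k) ^ N = 2 powr (real N * k)"
      proof -
        have "(2 powr real k) ^ N = (2 powr real k) powr real N" by (rule powr_realpow[symmetric]) simp
        then show ?thesis by (simp add: powr_powr mult.commute)
      qed
      also have "2 powr (real N * k) = inverse (2 powr (- (real N * k)))"
        by (simp add: powr_minus)
      finally show ?thesis by (simp only: divide_inverse inverse_inverse_eq)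
    qed
    have c: "q ^ k = 2 powr (\<alpha> * k) * 2 powr (- (real N * k))"
    proof -
      have "q ^ k = q powr real k" using q by (simp add: powr_realpow)
      also have "\<dots> = 2 powr ((\<alpha> - real N) * k)"
        unfolding q_def by (simp add: powr_powr)
      also have "\<dots> = 2 powr (\<alpha> * k) * 2 powr (- (real N * k))"
        by (simp add: powr_add[symmetric] algebra_simps)
      finally show ?thesis .
    qed
    have d: "2 powr (\<alpha> * (real k + 1)) = 2 powr \<alpha> * 2 powr (\<alpha> * k)"
      by (simp add: powr_add[symmetric] algebra_simps)
    show ?thesis unfolding a b c d by (simp add: algebra_simps)
  qed
  have sum: "summable (\<lambda>k. (R powr (-\<alpha>) * 2 powr \<alpha> * V * R ^ N) * q ^ k)"
    using q by (intro summable_mult summable_geometric) auto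
  have nn: "0 \<le> (R powr (-\<alpha>) * 2 powr \<alpha> * V * R ^ N) * q ^ k" for k
    using q that assms by simp
  have "(\<Sum>k. ennreal ((R powr (-\<alpha>) * 2 powr \<alpha> * V * R ^ N) * q ^ k))
     = ennreal (\<Sum>k. (R powr (-\<alpha>) * 2 powr \<alpha> * V * R ^ N) * q ^ k)"
    by (rule suminf_ennreal2[OF nn sum])
  then show ?thesis
    unfolding eq by (metis ennreal_less_top infinity_ennreal_def)
qed



declare iter_pd.simps[simp del]

lemma smooth_inst:
  "smooth_fun f \<Longrightarrow> set bs \<subseteq> Basis \<Longrightarrow> continuous_on UNIV (iter_pd bs f) \<and>
     (\<forall>b\<in>Basis. \<forall>x. (\<lambda>t. iter_pd bs f (x + t *\<^sub>R b)) differentiable (at 0))"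
  unfolding smooth_fun_def by blast

lemma cc_smooth: "Cc_inf \<Omega> f \<Longrightarrow> smooth_fun f" unfolding Cc_inf_def by blast

lemma smooth_cont: "smooth_fun f \<Longrightarrow> continuous_on UNIV f"
proof -
  assume sm: "smooth_fun f"
  have "set ([]::'a list) \<subseteq> Basis" by simp
  from conjunct1[OF smooth_inst[OF sm this]] show ?thesis by (simp only: iter_pd.simps(1))
qed

lemma smooth_diff: "smooth_fun f \<Longrightarrow> b \<in> Basis \<Longrightarrow> (\<lambda>t. f (x + t *\<^sub>R b)) differentiable (at 0)"
proof -
  assume sm: "smooth_fun f" and b: "b \<in> Basis"
  have "set ([]::'a list) \<subseteq> Basis" by simp
  from conjunct2[OF smooth_inst[OF sm this]] b show ?thesis by (simp only: iter_pd.simps(1))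
qed

lemma smooth_pd_cont: "smooth_fun f \<Longrightarrow> b \<in> Basis \<Longrightarrow> continuous_on UNIV (iter_pd [b] f)"
proof -
  assume sm: "smooth_fun f" and b: "b \<in> Basis"
  have "set [b] \<subseteq> Basis" using b by simp
  from conjunct1[OF smooth_inst[OF sm this]] show ?thesis .
qed

lemma cc_cont: "Cc_inf \<Omega> f \<Longrightarrow> continuous_on UNIV f"
  by (rule smooth_cont[OF cc_smooth])

lemma cc_zero_outside: "f x \<noteq> 0 \<Longrightarrow> x \<in> closure {x. f x \<noteq> 0}"
  by (rule subsetD[OF closure_subset]) simp

lemma cont_bound_compact_support:
  fixes g :: "'a::euclidean_space \<Rightarrow> real"
  assumes "continuous_on UNIV g" "compact K" "\<And>x. x \<notin> K \<Longrightarrow> g x = 0"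
  shows "\<exists>M\<ge>0. \<forall>x. \<bar>g x\<bar> \<le> M"
proof -
  have "compact (g ` K)"
    using assms by (intro compact_continuous_image continuous_on_subset[OF assms(1)]) auto
  then obtain B where B: "\<forall>y\<in>g ` K. norm y \<le> B"
    using compact_imp_bounded bounded_iff by metis
  show ?thesis
  proof (intro exI[of _ "max B 0"] conjI allI)
    fix x show "\<bar>g x\<bar> \<le> max B 0"
      using B assms(3)[of x] by (cases "x \<in> K") force+
  qed simp
qed

lemma cc_bounded:
  assumes "Cc_inf \<Omega> f"
  shows "\<exists>M\<ge>0. \<forall>x. \<bar>f x\<bar> \<le> M"
  using assms cc_cont[OF assms] cc_zero_outside
  by (intro cont_bound_compact_support[where K="closure {x. f x \<noteq> 0}"]) (auto simp: Cc_inf_def)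

lemma pd_deriv:
  assumes "smooth_fun f" "b \<in> Basis"
  shows "((\<lambda>t. f (z + t *\<^sub>R b)) has_real_derivative iter_pd [b] f (z + t0 *\<^sub>R b)) (at t0)"
proof -
  define w where "w = z + t0 *\<^sub>R b"
  have "(\<lambda>t. f (w + t *\<^sub>R b)) differentiable (at 0)"
    by (rule smooth_diff[OF assms])
  then have "((\<lambda>t. f (w + t *\<^sub>R b)) has_real_derivative deriv (\<lambda>t. f (w + t *\<^sub>R b)) 0) (at 0)"
    by (simp only: DERIV_deriv_iff_real_differentiable)
  moreover have "iter_pd [b] f w = deriv (\<lambda>t. f (w + t *\<^sub>R b)) 0"
    by (simp only: iter_pd.simps)
  ultimately have d: "((\<lambda>t. f (w + t *\<^sub>R b)) has_real_derivative iter_pd [b] f w) (at 0)"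
    by simp
  have e: "((\<lambda>t. t - t0) has_real_derivative 1) (at t0)"
    by (auto intro!: derivative_eq_intros)
  have "((\<lambda>t. f (w + (t - t0) *\<^sub>R b)) has_real_derivative iter_pd [b] f w * 1) (at t0)"
    using DERIV_chain2[of "\<lambda>t. f (w + t *\<^sub>R b)" _ "\<lambda>t. t - t0", OF _ e] d by simp
  moreover have "(\<lambda>t. f (w + (t - t0) *\<^sub>R b)) = (\<lambda>t. f (z + t *\<^sub>R b))"
    by (rule ext) (simp add: w_def algebra_simps)
  ultimately show ?thesis by (simp only: w_def mult_1_right)
qed

lemma pd_zero_outside:
  assumes "closed K" "\<And>x. x \<notin> K \<Longrightarrow> f x = 0" "z \<notin> K" "b \<in> Basis"
  shows "iter_pd [b] f z = 0"
proof -
  obtain e where e: "e > 0" "ball z e \<subseteq> - K"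
    using assms(1,3) open_contains_ball[of "- K"] by auto
  have "((\<lambda>t. 0::real) has_real_derivative 0) (at 0)" by simp
  then have "((\<lambda>t. f (z + t *\<^sub>R b)) has_real_derivative 0) (at 0)"
  proof (rule has_field_derivative_transform_within_open[where S="ball 0 e"])
    fix t :: real assume "t \<in> ball 0 e"
    then have "z + t *\<^sub>R b \<in> ball z e"
      using assms(4) by (auto simp: dist_norm)
    then show "0 = f (z + t *\<^sub>R b)" using e assms(2) by auto
  qed (use e in auto)
  then have "deriv (\<lambda>t. f (z + t *\<^sub>R b)) 0 = 0" by (rule DERIV_imp_deriv)
  then show ?thesis by (simp only: iter_pd.simps)
qed

lemma pd_bound:
  assumes "Cc_inf \<Omega> f"
  shows "\<exists>M\<ge>0. \<forall>b\<in>Basis. \<forall>z. \<bar>iter_pd [b] f z\<bar> \<le> M"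
proof -
  define K where "K = closure {x. f x \<noteq> 0}"
  have sm: "smooth_fun f" and K: "compact K" using assms unfolding Cc_inf_def K_def by blast+
  have cont: "continuous_on UNIV (iter_pd [b] f)" if "b \<in> Basis" for b
    by (rule smooth_pd_cont[OF sm that])
  define g where "g z = (\<Sum>b\<in>Basis. \<bar>iter_pd [b] f z\<bar>)" for z
  have gc: "continuous_on UNIV g"
    unfolding g_def by (intro continuous_on_sum continuous_on_rabs cont)
  have fz: "\<And>x. x \<notin> K \<Longrightarrow> f x = 0" using cc_zero_outside[of f] unfolding K_def by blast
  have pz: "iter_pd [b] f z = 0" if "b \<in> Basis" "z \<notin> K" for b z
    by (rule pd_zero_outside[of K f z b]) (use K fz that compact_imp_closed in auto)
  have gz: "g z = 0" if "z \<notin> K" for z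
    unfolding g_def using pz that by simp
  obtain M where M: "M \<ge> 0" "\<forall>z. \<bar>g z\<bar> \<le> M"
    using cont_bound_compact_support[OF gc K gz] by blast
  have bd: "\<bar>iter_pd [b] f z\<bar> \<le> M" if "b \<in> Basis" for b z
  proof -
    have "\<bar>iter_pd [b] f z\<bar> \<le> g z"
      unfolding g_def by (rule member_le_sum[OF that]) (simp_all del: iter_pd.simps)
    then show ?thesis using M(2)[rule_format, of z] by linarith
  qed
  show ?thesis using M(1) bd by blast
qed

lemma lip_line:
  assumes "smooth_fun f" "b \<in> Basis" "\<forall>z. \<bar>iter_pd [b] f z\<bar> \<le> M"
  shows "\<bar>f (z + t *\<^sub>R b) - f z\<bar> \<le> M * \<bar>t\<bar>"
proof -
  define g where "g t = f (z + t *\<^sub>R b)" for t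
  have D: "(g has_real_derivative iter_pd [b] f (z + x *\<^sub>R b)) (at x)" for x
    unfolding g_def by (rule pd_deriv[OF assms(1,2)])
  consider "t = 0" | "0 < t" | "t < 0" by linarith
  then show ?thesis
  proof cases
    case 1 then show ?thesis by simp
  next
    case 2
    obtain c where "g t - g 0 = (t - 0) * iter_pd [b] f (z + c *\<^sub>R b)"
      using MVT2[OF 2, of g "\<lambda>x. iter_pd [b] f (z + x *\<^sub>R b)"] D by blast
    then have "\<bar>g t - g 0\<bar> = \<bar>t\<bar> * \<bar>iter_pd [b] f (z + c *\<^sub>R b)\<bar>" by (simp add: abs_mult)
    also have "\<dots> \<le> \<bar>t\<bar> * M" using assms(3) by (intro mult_left_mono) auto
    finally show ?thesis by (simp add: g_def mult.commute)
  next
    case 3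
    obtain c where "g 0 - g t = (0 - t) * iter_pd [b] f (z + c *\<^sub>R b)"
      using MVT2[OF 3, of g "\<lambda>x. iter_pd [b] f (z + x *\<^sub>R b)"] D by blast
    then have "\<bar>g t - g 0\<bar> = \<bar>t\<bar> * \<bar>iter_pd [b] f (z + c *\<^sub>R b)\<bar>" by (simp add: abs_mult abs_minus_commute)
    also have "\<dots> \<le> \<bar>t\<bar> * M" using assms(3) by (intro mult_left_mono) auto
    finally show ?thesis by (simp add: g_def mult.commute)
  qed
qed

lemma lip_sum:
  assumes "smooth_fun f" "\<forall>b\<in>Basis. \<forall>z. \<bar>iter_pd [b] f z\<bar> \<le> M" "finite B" "B \<subseteq> Basis"
  shows "\<bar>f (z + (\<Sum>b\<in>B. c b *\<^sub>R b)) - f z\<bar> \<le> M * (\<Sum>b\<in>B. \<bar>c b\<bar>)"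
  using assms(3,4)
proof (induction B rule: finite_induct)
  case empty then show ?case by simp
next
  case (insert b B)
  define z' where "z' = z + (\<Sum>b\<in>B. c b *\<^sub>R b)"
  have eq: "z + (\<Sum>b\<in>insert b B. c b *\<^sub>R b) = z' + c b *\<^sub>R b"
    using insert by (simp add: z'_def algebra_simps)
  have 1: "\<bar>f (z' + c b *\<^sub>R b) - f z'\<bar> \<le> M * \<bar>c b\<bar>"
    using insert assms by (intro lip_line) auto
  have 2: "\<bar>f z' - f z\<bar> \<le> M * (\<Sum>b\<in>B. \<bar>c b\<bar>)"
    using insert unfolding z'_def by auto
  have "\<bar>f (z + (\<Sum>b\<in>insert b B. c b *\<^sub>R b)) - f z\<bar> \<le> \<bar>f (z' + c b *\<^sub>R b) - f z'\<bar> + \<bar>f z' - f z\<bar>"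
    unfolding eq by linarith
  also have "\<dots> \<le> M * \<bar>c b\<bar> + M * (\<Sum>b\<in>B. \<bar>c b\<bar>)" using 1 2 by linarith
  also have "\<dots> = M * (\<Sum>b\<in>insert b B. \<bar>c b\<bar>)" using insert by (simp add: algebra_simps)
  finally show ?case .
qed

lemma cc_lipschitz:
  assumes "Cc_inf \<Omega> f"
  shows "\<exists>L\<ge>0. \<forall>x y. \<bar>f x - f y\<bar> \<le> L * norm (x - y)"
proof -
  obtain M where M: "M \<ge> 0" "\<forall>b\<in>Basis. \<forall>z. \<bar>iter_pd [b] f z\<bar> \<le> M"
    using pd_bound[OF assms] by blast
  have sm: "smooth_fun f" by (rule cc_smooth[OF assms])
  have lipb: "\<bar>f x - f y\<bar> \<le> (M * DIM('a)) * norm (x - y)" for x y :: 'a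
  proof -
    have "y + (\<Sum>b\<in>Basis. ((x - y) \<bullet> b) *\<^sub>R b) = x"
      by (simp add: euclidean_representation)
    then have "\<bar>f x - f y\<bar> \<le> M * (\<Sum>b\<in>Basis. \<bar>(x - y) \<bullet> b\<bar>)"
      using lip_sum[OF sm M(2), of Basis y "\<lambda>b. (x - y) \<bullet> b"] by simp
    also have "\<dots> \<le> M * (\<Sum>b\<in>(Basis::'a set). norm (x - y))"
      using M by (intro mult_left_mono sum_mono Basis_le_norm) auto
    also have "\<dots> = (M * DIM('a)) * norm (x - y)" by simp
    finally show ?thesis .
  qed
  have "M * DIM('a) \<ge> 0" using M(1) by simp
  then show ?thesis by (intro exI[of _ "M * DIM('a)"] conjI allI lipb)
qed



definition Kin :: "real \<Rightarrow> 'a::euclidean_space set \<Rightarrow> ('a \<Rightarrow> real) \<Rightarrow> 'a \<Rightarrow> ennreal" where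
  "Kin s \<Omega> v x = (\<integral>\<^sup>+ y. ennreal ((v x - v y)\<^sup>2 / norm (x - y) powr (real DIM('a) + 2 * s))
        * indicator \<Omega> y \<partial>lborel)"

lemma ball_sets_borel[measurable]: "ball (x::'a::euclidean_space) r \<in> sets borel" by simp

lemma Qform_lborel: "Qform s \<Omega> v = ennreal (c_const DIM('a) s / 2) * (\<integral>\<^sup>+ x. Kin s \<Omega> v x * indicator \<Omega> x \<partial>lborel)"
  for v :: "'a::euclidean_space \<Rightarrow> real"
  unfolding Qform_def Kin_def nn_integral_completion ..

lemma Kin_meas[measurable]:
  fixes v :: "'a::euclidean_space \<Rightarrow> real"
  assumes [measurable]: "v \<in> borel_measurable borel" "\<Omega> \<in> sets borel"
  shows "Kin s \<Omega> v \<in> borel_measurable lborel"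
proof -
  have "(\<lambda>x. \<integral>\<^sup>+ y. (\<lambda>(x,y). ennreal ((v x - v y)\<^sup>2 / norm (x - y) powr (real DIM('a) + 2 * s))
        * indicator \<Omega> y) (x,y) \<partial>lborel) \<in> borel_measurable (lborel::'a measure)"
    by (rule lborel.borel_measurable_nn_integral_fst) measurable
  then show ?thesis unfolding Kin_def by simp
qed

lemma kernel_bound:
  fixes a r L e \<alpha>1 :: real
  assumes "0 \<le> L" "\<bar>a\<bar> \<le> L * r" "0 \<le> r" "0 \<le> e - 2" "e - 2 \<le> \<alpha>1"
  shows "a\<^sup>2 / r powr e \<le> L\<^sup>2 * (r powr (-\<alpha>1) + 1)"
proof (cases "r = 0")
  case True
  then have "a = 0" using assms by simp
  then show ?thesis using assms by simp
next
  case False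
  then have r: "0 < r" using assms by simp
  have "a\<^sup>2 \<le> (L * r)\<^sup>2"
    using assms by (metis abs_ge_zero abs_le_square_iff abs_of_nonneg mult_nonneg_nonneg order_trans)
  then have "a\<^sup>2 / r powr e \<le> (L * r)\<^sup>2 / r powr e"
    using r by (intro divide_right_mono) auto
  also have "(L * r)\<^sup>2 / r powr e = L\<^sup>2 * (r powr 2 / r powr e)"
    using r by (simp add: power_mult_distrib powr_numeral)
  also have "r powr 2 / r powr e = r powr (-(e - 2))"
    by (simp add: powr_diff[symmetric])
  also have "r powr (-(e - 2)) \<le> r powr (-\<alpha>1) + 1"
  proof (cases "r \<le> 1")
    case True
    then have "r powr (-(e - 2)) \<le> r powr (-\<alpha>1)"
      using r assms by (intro powr_mono') auto
    then show ?thesis by simp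
  next
    case False
    then have "r powr (-(e - 2)) \<le> r powr 0"
      using assms by (intro powr_mono) auto
    moreover have "0 \<le> r powr (-\<alpha>1)" by simp
    moreover have "r powr 0 = 1" using r by simp
    ultimately show ?thesis by linarith
  qed
  finally show ?thesis using assms by (simp add: mult_left_mono)
qed


lemma Q_conv:
  fixes \<phi> :: "'a::euclidean_space \<Rightarrow> real" and \<Omega> :: "'a set"
  assumes cc: "Cc_inf \<Omega> \<phi>" and bd: "bounded \<Omega>" and op: "open \<Omega>" and N2: "DIM('a) \<ge> 2"
    and s: "0 \<le> s0" "s0 < s1" "s1 < 1"
  shows "((\<lambda>s. \<integral>\<^sup>+ x. Kin s \<Omega> \<phi> x * indicator \<Omega> x \<partial>lborel) \<longlongrightarrow>
            (\<integral>\<^sup>+ x. Kin s0 \<Omega> \<phi> x * indicator \<Omega> x \<partial>lborel)) (at_right s0)"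
    and "(\<integral>\<^sup>+ x. Kin s0 \<Omega> \<phi> x * indicator \<Omega> x \<partial>lborel) < \<infinity>"
proof -
  obtain L where L: "L \<ge> 0" "\<And>x y. \<bar>\<phi> x - \<phi> y\<bar> \<le> L * norm (x - y)"
    using cc_lipschitz[OF cc] by blast
  have \<phi>m[measurable]: "\<phi> \<in> borel_measurable borel"
    by (rule borel_measurable_continuous_onI[OF cc_cont[OF cc]])
  have \<Omega>m[measurable]: "\<Omega> \<in> sets borel" using op by simp
  obtain B where B: "\<And>x. x \<in> \<Omega> \<Longrightarrow> norm x \<le> B"
    using bd bounded_iff by blast
  define D where "D = 2 * \<bar>B\<bar> + 1"
  have D: "D > 0" by (simp add: D_def)
  have inball: "y \<in> ball x D" if "x \<in> \<Omega>" "y \<in> \<Omega>" for x y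
  proof -
    have "dist x y \<le> norm x + norm y" by (simp add: dist_norm norm_triangle_ineq4)
    also have "\<dots> \<le> 2 * \<bar>B\<bar>" using B[OF that(1)] B[OF that(2)] by linarith
    finally show ?thesis by (simp add: D_def)
  qed
  define \<alpha>1 where "\<alpha>1 = real DIM('a) - 2 + 2 * s1"
  have \<alpha>1: "0 \<le> \<alpha>1" "\<alpha>1 < real DIM('a)" using N2 s by (auto simp: \<alpha>1_def)
  define G where "G = (\<Sum>k. ennreal ((D / 2^Suc k) powr (-\<alpha>1) * (unit_ball_vol DIM('a) * (D/2^k)^DIM('a))))"
  have G: "G < \<infinity>"
    unfolding G_def by (rule sing_series_finite[OF \<alpha>1 D]) (simp add: unit_ball_vol_nonneg)
  have m\<Omega>: "emeasure lborel \<Omega> < \<infinity>"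
  proof -
    have "\<Omega> \<subseteq> ball 0 D"
      using B by (auto simp: D_def) (smt (verit) B)
    then have "emeasure lborel \<Omega> \<le> emeasure lborel (ball (0::'a) D)"
      by (intro emeasure_mono) auto
    then show ?thesis using emeasure_lborel_ball_finite[of "0::'a" D] by (simp add: order_le_less_trans)
  qed
  define Cin where "Cin = ennreal (L\<^sup>2) * (G + emeasure lborel \<Omega>)"
  have Cin: "Cin < \<infinity>" using G m\<Omega> by (simp add: Cin_def ennreal_mult_less_top)
  define W where "W x y = ennreal (L\<^sup>2 * (norm (x - y) powr (-\<alpha>1) + 1)) * indicator \<Omega> y" for x y
  have Wm[measurable]: "W x \<in> borel_measurable lborel" for x unfolding W_def by measurable
  have Wint: "(\<integral>\<^sup>+ y. W x y \<partial>lborel) \<le> Cin" if x: "x \<in> \<Omega>" for x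
  proof -
    have "(\<integral>\<^sup>+ y. W x y \<partial>lborel) \<le> (\<integral>\<^sup>+ y. ennreal (L\<^sup>2) * (ennreal (norm (x - y) powr (-\<alpha>1)) * indicator (ball x D) y + indicator \<Omega> y) \<partial>lborel)"
    proof (intro nn_integral_mono)
      fix y
      show "W x y \<le> ennreal (L\<^sup>2) * (ennreal (norm (x - y) powr (-\<alpha>1)) * indicator (ball x D) y + indicator \<Omega> y)"
      proof (cases "y \<in> \<Omega>")
        case True
        then have "y \<in> ball x D" using inball[OF x] by blast
        have e: "ennreal (L\<^sup>2 * (norm (x - y) powr (-\<alpha>1) + 1)) = ennreal (L\<^sup>2) * (ennreal (norm (x - y) powr (-\<alpha>1)) + 1)"
          using ennreal_mult[of "L\<^sup>2" "norm (x - y) powr (-\<alpha>1) + 1"] ennreal_plus[of "norm (x - y) powr (-\<alpha>1)" 1]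
          by simp
        show ?thesis using True \<open>y \<in> ball x D\<close> by (simp only: W_def e indicator_simps mult_1_right)
      qed (simp add: W_def)
    qed
    also have "\<dots> = ennreal (L\<^sup>2) * ((\<integral>\<^sup>+ y. ennreal (norm (x - y) powr (-\<alpha>1)) * indicator (ball x D) y \<partial>lborel) + emeasure lborel \<Omega>)"
    proof -
      have m1: "(\<lambda>y. ennreal (norm (x - y) powr (-\<alpha>1)) * indicator (ball x D) y) \<in> borel_measurable lborel"
        by measurable
      have m2: "(\<lambda>y. indicator \<Omega> y :: ennreal) \<in> borel_measurable lborel" by measurable
      have "(\<integral>\<^sup>+ y. ennreal (L\<^sup>2) * (ennreal (norm (x - y) powr (-\<alpha>1)) * indicator (ball x D) y + indicator \<Omega> y) \<partial>lborel)
        = ennreal (L\<^sup>2) * (\<integral>\<^sup>+ y. (ennreal (norm (x - y) powr (-\<alpha>1)) * indicator (ball x D) y + indicator \<Omega> y) \<partial>lborel)"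
        by (rule nn_integral_cmult) (use m1 m2 in measurable)
      also have "(\<integral>\<^sup>+ y. (ennreal (norm (x - y) powr (-\<alpha>1)) * indicator (ball x D) y + indicator \<Omega> y) \<partial>lborel)
         = (\<integral>\<^sup>+ y. ennreal (norm (x - y) powr (-\<alpha>1)) * indicator (ball x D) y \<partial>lborel) + (\<integral>\<^sup>+ y. indicator \<Omega> y \<partial>lborel)"
        by (rule nn_integral_add[OF m1 m2])
      also have "(\<integral>\<^sup>+ y. indicator \<Omega> y \<partial>lborel) = emeasure lborel \<Omega>"
        by (rule nn_integral_indicator) simp
      finally show ?thesis .
    qed
    also have "\<dots> \<le> Cin"
      unfolding Cin_def using sing_bound[OF \<alpha>1(1) D, of x] unfolding G_def
      by (intro mult_left_mono add_right_mono) auto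
    finally show ?thesis .
  qed
  have ptb: "ennreal ((\<phi> x - \<phi> y)\<^sup>2 / norm (x - y) powr (real DIM('a) + 2 * s)) * indicator \<Omega> y \<le> W x y"
    if "s0 \<le> s" "s \<le> s1" for x y s
  proof (cases "y \<in> \<Omega>")
    case True
    have "(\<phi> x - \<phi> y)\<^sup>2 / norm (x - y) powr (real DIM('a) + 2 * s) \<le> L\<^sup>2 * (norm (x - y) powr (-\<alpha>1) + 1)"
      using N2 that s by (intro kernel_bound L) (auto simp: \<alpha>1_def)
    then show ?thesis using True by (simp add: W_def)
  qed (simp add: W_def)
  have Kb: "Kin s \<Omega> \<phi> x \<le> Cin" if "x \<in> \<Omega>" "s0 \<le> s" "s \<le> s1" for x s
  proof -
    have "Kin s \<Omega> \<phi> x \<le> (\<integral>\<^sup>+ y. W x y \<partial>lborel)"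
      unfolding Kin_def using that by (intro nn_integral_mono ptb) auto
    then show ?thesis using Wint[OF that(1)] by simp
  qed
  have Kconv: "(\<lambda>n. Kin (S n) \<Omega> \<phi> x) \<longlonglongrightarrow> Kin s0 \<Omega> \<phi> x"
    if x: "x \<in> \<Omega>" and S: "\<And>n. s0 < S n" "\<And>n. S n < s1" "S \<longlonglongrightarrow> s0" for x S
    unfolding Kin_def
  proof (rule nn_integral_dominated_convergence[where w="W x"])
    show "AE y in lborel. ennreal ((\<phi> x - \<phi> y)\<^sup>2 / norm (x - y) powr (real DIM('a) + 2 * S j)) * indicator \<Omega> y \<le> W x y" for j
      using S by (intro AE_I2 ptb) (auto intro: less_imp_le)
    show "(\<integral>\<^sup>+ y. W x y \<partial>lborel) < \<infinity>" using Wint[OF x] Cin by (simp add: order_le_less_trans)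
    show "AE y in lborel. (\<lambda>n. ennreal ((\<phi> x - \<phi> y)\<^sup>2 / norm (x - y) powr (real DIM('a) + 2 * S n)) * indicator \<Omega> y)
      \<longlonglongrightarrow> ennreal ((\<phi> x - \<phi> y)\<^sup>2 / norm (x - y) powr (real DIM('a) + 2 * s0)) * indicator \<Omega> y"
    proof (intro AE_I2)
      fix y
      show "(\<lambda>n. ennreal ((\<phi> x - \<phi> y)\<^sup>2 / norm (x - y) powr (real DIM('a) + 2 * S n)) * indicator \<Omega> y)
      \<longlonglongrightarrow> ennreal ((\<phi> x - \<phi> y)\<^sup>2 / norm (x - y) powr (real DIM('a) + 2 * s0)) * indicator \<Omega> y"
      proof (cases "y = x")
        case True then show ?thesis by simp
      next
        case False
        then have nz: "norm (x - y) \<noteq> 0" by simp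
        have "(\<lambda>n. (\<phi> x - \<phi> y)\<^sup>2 / norm (x - y) powr (real DIM('a) + 2 * S n))
            \<longlonglongrightarrow> (\<phi> x - \<phi> y)\<^sup>2 / norm (x - y) powr (real DIM('a) + 2 * s0)"
          using nz by (intro tendsto_intros S(3)) auto
        then have "(\<lambda>n. ennreal ((\<phi> x - \<phi> y)\<^sup>2 / norm (x - y) powr (real DIM('a) + 2 * S n)))
            \<longlonglongrightarrow> ennreal ((\<phi> x - \<phi> y)\<^sup>2 / norm (x - y) powr (real DIM('a) + 2 * s0))"
          by (rule tendsto_ennrealI)
        then show ?thesis by (cases "y \<in> \<Omega>") simp_all
      qed
    qed
  qed measurable
  have main: "(\<lambda>n. \<integral>\<^sup>+ x. Kin (S n) \<Omega> \<phi> x * indicator \<Omega> x \<partial>lborel) \<longlonglongrightarrow>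
            (\<integral>\<^sup>+ x. Kin s0 \<Omega> \<phi> x * indicator \<Omega> x \<partial>lborel)"
    if S: "\<And>n. s0 < S n" "\<And>n. S n < s1" "S \<longlonglongrightarrow> s0" for S
  proof (rule nn_integral_dominated_convergence[where w="\<lambda>x. Cin * indicator \<Omega> x"])
    show "AE x in lborel. Kin (S j) \<Omega> \<phi> x * indicator \<Omega> x \<le> Cin * indicator \<Omega> x" for j
      using S Kb by (intro AE_I2) (auto simp: indicator_def less_imp_le)
    show "(\<integral>\<^sup>+ x. Cin * indicator \<Omega> x \<partial>lborel) < \<infinity>"
      using Cin m\<Omega> by (simp add: nn_integral_cmult_indicator ennreal_mult_less_top)
    show "AE x in lborel. (\<lambda>n. Kin (S n) \<Omega> \<phi> x * indicator \<Omega> x) \<longlonglongrightarrow> Kin s0 \<Omega> \<phi> x * indicator \<Omega> x"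
    proof (intro AE_I2)
      fix x show "(\<lambda>n. Kin (S n) \<Omega> \<phi> x * indicator \<Omega> x) \<longlonglongrightarrow> Kin s0 \<Omega> \<phi> x * indicator \<Omega> x"
        using Kconv[OF _ S] by (cases "x \<in> \<Omega>") auto
    qed
  qed measurable
  show "((\<lambda>s. \<integral>\<^sup>+ x. Kin s \<Omega> \<phi> x * indicator \<Omega> x \<partial>lborel) \<longlongrightarrow>
            (\<integral>\<^sup>+ x. Kin s0 \<Omega> \<phi> x * indicator \<Omega> x \<partial>lborel)) (at_right s0)"
    by (rule tendsto_at_right_sequentially[OF s(2)]) (rule main)
  have "(\<integral>\<^sup>+ x. Kin s0 \<Omega> \<phi> x * indicator \<Omega> x \<partial>lborel) \<le> (\<integral>\<^sup>+ x. Cin * indicator \<Omega> x \<partial>lborel)"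
    using Kb s by (intro nn_integral_mono) (auto simp: indicator_def)
  also have "\<dots> < \<infinity>"
    using Cin m\<Omega> by (simp add: nn_integral_cmult_indicator ennreal_mult_less_top)
  finally show "(\<integral>\<^sup>+ x. Kin s0 \<Omega> \<phi> x * indicator \<Omega> x \<partial>lborel) < \<infinity>" .
qed



lemma c_const_pos: "0 < s \<Longrightarrow> s < 1 \<Longrightarrow> 0 < c_const N s"
  unfolding c_const_def
  by (intro divide_pos_pos mult_pos_pos Gamma_real_pos) auto

lemma c_const_tendsto:
  assumes "0 < s0" "s0 < 1"
  shows "((\<lambda>s. c_const N s) \<longlongrightarrow> c_const N s0) (at_right s0)"
proof -
  have g1: "(real N + 2 * s0) / 2 \<notin> \<int>\<^sub>\<le>\<^sub>0"
    using assms nonpos_Ints_nonpos by force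
  have g2: "1 - s0 \<notin> \<int>\<^sub>\<le>\<^sub>0"
    using assms nonpos_Ints_nonpos by force
  have nz: "pi powr (real N / 2) * Gamma (1 - s0) \<noteq> 0"
  proof -
    have "0 < Gamma (1 - s0)" using assms by (intro Gamma_real_pos) simp
    then show ?thesis by simp
  qed
  have "isCont (\<lambda>s. s * 2 powr (2 * s) * Gamma ((real N + 2 * s) / 2) / (pi powr (real N / 2) * Gamma (1 - s))) s0"
    using nz by (intro continuous_intros isCont_Gamma g1 g2) auto
  then have "continuous (at s0 within {s0<..}) (c_const N)"
    unfolding c_const_def by (rule continuous_at_imp_continuous_at_within)
  then show ?thesis by (simp add: continuous_within)
qed

lemma cc_in_Hs0:
  assumes "Cc_inf \<Omega> \<phi>"
  shows "\<phi> \<in> Hs0 s \<Omega>"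
proof -
  have "\<phi> \<in> borel_measurable borel"
    by (rule borel_measurable_continuous_onI[OF cc_cont[OF assms]])
  then have m: "\<phi> \<in> borel_measurable lebesgue"
    by (intro measurable_completion) simp
  have z: "Qform s \<Omega> (\<lambda>x. \<phi> x - \<phi> x) = 0" by (simp add: Qform_def)
  show ?thesis unfolding Hs0_def
    using m assms z by (intro CollectI conjI exI[of _ "\<lambda>n. \<phi>"]) auto
qed


lemma Lp_conv:
  fixes \<phi> :: "'a::euclidean_space \<Rightarrow> real"
  assumes cc: "Cc_inf \<Omega> \<phi>" and bd: "bounded \<Omega>" and op: "open \<Omega>" and N2: "DIM('a) \<ge> 2"
    and nt: "\<not> (AE x in lebesgue. x \<in> \<Omega> \<longrightarrow> \<phi> x = 0)"
    and s: "0 \<le> s0" "s0 < 1"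
  shows "((\<lambda>s. Lp_norm_sq (crit_exp DIM('a) s) \<Omega> \<phi>) \<longlongrightarrow> Lp_norm_sq (crit_exp DIM('a) s0) \<Omega> \<phi>) (at_right s0)"
    and "0 < Lp_norm_sq (crit_exp DIM('a) s0) \<Omega> \<phi>"
proof -
  define p where "p s = crit_exp DIM('a) s" for s
  define P where "P s = (\<integral>\<^sup>+ x. ennreal (\<bar>\<phi> x\<bar> powr p s) * indicator \<Omega> x \<partial>lborel)" for s
  have LP: "Lp_norm_sq (p s) \<Omega> \<phi> = enn2real (P s) powr (2 / p s)" for s
    unfolding Lp_norm_sq_def P_def nn_integral_completion ..
  define s1 where "s1 = (s0 + 1) / 2"
  have s1: "s0 < s1" "s1 < 1" using s by (auto simp: s1_def)
  have ppos: "0 < p s" if "s < 1" for s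
    using that N2 by (auto simp: p_def crit_exp_def)
  have pmono: "p s \<le> p s1" if "s \<le> s1" for s
    unfolding p_def crit_exp_def using that N2 s1 by (intro divide_left_mono mult_pos_pos) auto
  have pcont: "isCont p s0"
    unfolding p_def crit_exp_def using N2 s by (intro continuous_intros) auto
  obtain M where M: "M \<ge> 0" "\<And>x. \<bar>\<phi> x\<bar> \<le> M"
    using cc_bounded[OF cc] by blast
  have \<phi>m[measurable]: "\<phi> \<in> borel_measurable borel"
    by (rule borel_measurable_continuous_onI[OF cc_cont[OF cc]])
  have \<Omega>m[measurable]: "\<Omega> \<in> sets borel" using op by simp
  have m\<Omega>: "emeasure lborel \<Omega> < \<infinity>" by (rule emeasure_bounded_finite[OF bd])
  define w where "w x = ennreal ((M + 1) powr p s1) * indicator \<Omega> x" for x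
  have wm[measurable]: "w \<in> borel_measurable lborel" unfolding w_def by measurable
  have um: "(\<lambda>x. ennreal (\<bar>\<phi> x\<bar> powr e) * indicator \<Omega> x) \<in> borel_measurable lborel" for e
    by measurable
  have wint: "(\<integral>\<^sup>+ x. w x \<partial>lborel) < \<infinity>"
    unfolding w_def using m\<Omega> by (simp add: nn_integral_cmult_indicator ennreal_mult_less_top)
  have bnd: "ennreal (\<bar>\<phi> x\<bar> powr p s) * indicator \<Omega> x \<le> w x" if "s0 \<le> s" "s \<le> s1" for x s
  proof -
    have "\<bar>\<phi> x\<bar> powr p s \<le> (M + 1) powr p s"
      using M(2)[of x] ppos[of s] that s1 by (intro powr_mono2) auto
    also have "\<dots> \<le> (M + 1) powr p s1"
      using M(1) pmono[OF that(2)] by (intro powr_mono) auto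
    finally show ?thesis unfolding w_def by (cases "x \<in> \<Omega>") (auto intro: ennreal_leI)
  qed
  have Pconv: "(\<lambda>n. P (S n)) \<longlonglongrightarrow> P s0"
    if S: "\<And>n. s0 < S n" "\<And>n. S n < s1" "S \<longlonglongrightarrow> s0" for S
    unfolding P_def
  proof (rule nn_integral_dominated_convergence[where w=w])
    show "AE x in lborel. ennreal (\<bar>\<phi> x\<bar> powr p (S j)) * indicator \<Omega> x \<le> w x" for j
      using S by (intro AE_I2 bnd) (auto intro: less_imp_le)
    show "(\<integral>\<^sup>+ x. w x \<partial>lborel) < \<infinity>" by (rule wint)
    have pS: "(\<lambda>n. p (S n)) \<longlonglongrightarrow> p s0" by (rule isCont_tendsto_compose[OF pcont S(3)])
    show "AE x in lborel. (\<lambda>n. ennreal (\<bar>\<phi> x\<bar> powr p (S n)) * indicator \<Omega> x) \<longlonglongrightarrow> ennreal (\<bar>\<phi> x\<bar> powr p s0) * indicator \<Omega> x"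
    proof (intro AE_I2)
      fix x
      have "(\<lambda>n. \<bar>\<phi> x\<bar> powr p (S n)) \<longlonglongrightarrow> \<bar>\<phi> x\<bar> powr p s0"
        using ppos[of s0] s by (intro tendsto_powr' tendsto_const pS) auto
      then have "(\<lambda>n. ennreal (\<bar>\<phi> x\<bar> powr p (S n))) \<longlonglongrightarrow> ennreal (\<bar>\<phi> x\<bar> powr p s0)"
        by (rule tendsto_ennrealI)
      then show "(\<lambda>n. ennreal (\<bar>\<phi> x\<bar> powr p (S n)) * indicator \<Omega> x) \<longlonglongrightarrow> ennreal (\<bar>\<phi> x\<bar> powr p s0) * indicator \<Omega> x"
        by (cases "x \<in> \<Omega>") simp_all
    qed
  qed (rule um wm)+
  have Plim: "(P \<longlongrightarrow> P s0) (at_right s0)"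
    by (rule tendsto_at_right_sequentially[OF s1(1)]) (rule Pconv)
  have Pfin: "P s0 < \<infinity>"
  proof -
    have "P s0 \<le> (\<integral>\<^sup>+ x. w x \<partial>lborel)"
      unfolding P_def using s1 by (intro nn_integral_mono bnd) auto
    then show ?thesis using wint by (simp add: order_le_less_trans)
  qed
  have Ppos: "P s0 \<noteq> 0"
  proof
    assume "P s0 = 0"
    then have "AE x in lborel. ennreal (\<bar>\<phi> x\<bar> powr p s0) * indicator \<Omega> x = 0"
      unfolding P_def by (subst (asm) nn_integral_0_iff_AE) measurable
    then have "AE x in lborel. x \<in> \<Omega> \<longrightarrow> \<phi> x = 0"
      by eventually_elim (auto simp: indicator_def)
    then show False using nt by (simp add: AE_completion_iff)
  qed
  define a where "a = enn2real (P s0)"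
  have a1: "P s0 = ennreal a" using Pfin by (simp add: a_def ennreal_enn2real)
  have a2: "0 < a" using Pfin Ppos by (simp add: a_def enn2real_positive_iff zero_less_iff_neq_zero)
  note a = a1 a2
  have t1: "((\<lambda>s. enn2real (P s)) \<longlongrightarrow> a) (at_right s0)"
    using Plim a1 a2 by (intro tendsto_enn2real) auto
  have t2: "(p \<longlongrightarrow> p s0) (at_right s0)"
    using pcont by (simp add: isCont_def filterlim_at_split)
  have t3: "((\<lambda>s. 2 / p s) \<longlongrightarrow> 2 / p s0) (at_right s0)"
    by (rule tendsto_divide[OF tendsto_const t2]) (use ppos[of s0] s in simp)
  have "((\<lambda>s. enn2real (P s) powr (2 / p s)) \<longlongrightarrow> a powr (2 / p s0)) (at_right s0)"
    by (rule tendsto_powr[OF t1 t3]) (use a2 in simp)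
  moreover have "a powr (2 / p s0) = Lp_norm_sq (p s0) \<Omega> \<phi>"
    unfolding LP a_def ..
  ultimately have "((\<lambda>s. Lp_norm_sq (p s) \<Omega> \<phi>) \<longlongrightarrow> Lp_norm_sq (p s0) \<Omega> \<phi>) (at_right s0)"
    unfolding LP by simp
  then show "((\<lambda>s. Lp_norm_sq (crit_exp DIM('a) s) \<Omega> \<phi>) \<longlongrightarrow> Lp_norm_sq (crit_exp DIM('a) s0) \<Omega> \<phi>) (at_right s0)"
    unfolding p_def .
  have "0 < a powr (2 / p s0)" using a2 by simp
  then show "0 < Lp_norm_sq (crit_exp DIM('a) s0) \<Omega> \<phi>"
    using LP[of s0] unfolding p_def a_def by simp
qed


lemma S_le_ratio:
  fixes u :: "'a::euclidean_space \<Rightarrow> real"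
  assumes "u \<in> Hs0 s \<Omega>" "\<not> (AE x in lebesgue. x \<in> \<Omega> \<longrightarrow> u x = 0)"
  shows "S_const s \<Omega> \<le> Qform s \<Omega> u / ennreal (Lp_norm_sq (crit_exp DIM('a) s) \<Omega> u)"
  unfolding S_const_def by (rule INF_lower) (use assms in blast)

lemma partA:
  fixes \<phi> :: "'a::euclidean_space \<Rightarrow> real"
  assumes cc: "Cc_inf \<Omega> \<phi>" and bd: "bounded \<Omega>" and op: "open \<Omega>" and N2: "DIM('a) \<ge> 2"
    and nt: "\<not> (AE x in lebesgue. x \<in> \<Omega> \<longrightarrow> \<phi> x = 0)"
    and s: "0 < s0" "s0 < 1"
  shows "Limsup (at_right s0) (\<lambda>s. S_const s \<Omega>) \<le> Qform s0 \<Omega> \<phi> / ennreal (Lp_norm_sq (crit_exp DIM('a) s0) \<Omega> \<phi>)"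
proof -
  define I where "I s = (\<integral>\<^sup>+ x. Kin s \<Omega> \<phi> x * indicator \<Omega> x \<partial>lborel)" for s
  define L where "L s = Lp_norm_sq (crit_exp DIM('a) s) \<Omega> \<phi>" for s
  define R where "R s = Qform s \<Omega> \<phi> / ennreal (L s)" for s
  define c where "c s = c_const DIM('a) s / 2" for s
  have Q: "Qform s \<Omega> \<phi> = ennreal (c s) * I s" for s
    unfolding Qform_lborel I_def c_def ..
  have SR: "S_const s \<Omega> \<le> R s" for s
    unfolding R_def L_def by (rule S_le_ratio[OF cc_in_Hs0[OF cc] nt])
  define s1 where "s1 = (s0 + 1) / 2"
  have s1: "s0 < s1" "s1 < 1" using s by (auto simp: s1_def)
  have Ilim: "(I \<longlongrightarrow> I s0) (at_right s0)" and Ifin: "I s0 < \<infinity>"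
    unfolding I_def using Q_conv[OF cc bd op N2 _ s1] s by auto
  have Llim: "(L \<longlongrightarrow> L s0) (at_right s0)" and Lpos: "0 < L s0"
    unfolding L_def using Lp_conv[OF cc bd op N2 nt] s by auto
  have clim: "(c \<longlongrightarrow> c s0) (at_right s0)"
    unfolding c_def by (intro tendsto_divide tendsto_const c_const_tendsto s) simp
  define i where "i = enn2real (I s0)"
  have i: "I s0 = ennreal i" "0 \<le> i" using Ifin by (auto simp: i_def ennreal_enn2real)
  have ev1: "\<forall>\<^sub>F s in at_right s0. I s < \<infinity>"
    using order_tendstoD(2)[OF Ilim Ifin] .
  have ev2: "\<forall>\<^sub>F s in at_right s0. 0 < L s"
    using order_tendstoD(1)[OF Llim Lpos] .
  have ev3: "\<forall>\<^sub>F s in at_right s0. 0 < s \<and> s < 1"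
    by (rule eventually_at_rightI[OF _ s(2)]) (use s in auto)
  have Rform: "R s = ennreal (c s * enn2real (I s) / L s)" if "I s < \<infinity>" "0 < L s" "0 < s" "s < 1" for s
  proof -
    have cpos: "0 < c s" using c_const_pos[OF that(3,4)] by (simp add: c_def)
    have "I s = ennreal (enn2real (I s))" using that(1) by (simp add: ennreal_enn2real)
    then have "Qform s \<Omega> \<phi> = ennreal (c s * enn2real (I s))"
      unfolding Q using cpos by (metis ennreal_mult' less_imp_le)
    then show ?thesis unfolding R_def using that cpos
      by (simp add: divide_ennreal)
  qed
  have evR: "\<forall>\<^sub>F s in at_right s0. ennreal (c s * enn2real (I s) / L s) = R s"
    using ev1 ev2 ev3 by eventually_elim (simp add: Rform)
  have "((\<lambda>s. c s * enn2real (I s) / L s) \<longlongrightarrow> c s0 * i / L s0) (at_right s0)"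
  proof (intro tendsto_mult tendsto_divide clim Llim)
    show "((\<lambda>s. enn2real (I s)) \<longlongrightarrow> i) (at_right s0)"
      using Ilim i by (intro tendsto_enn2real) auto
  qed (use Lpos in simp)
  then have "((\<lambda>s. ennreal (c s * enn2real (I s) / L s)) \<longlongrightarrow> ennreal (c s0 * i / L s0)) (at_right s0)"
    by (rule tendsto_ennrealI)
  then have Rlim: "(R \<longlongrightarrow> ennreal (c s0 * i / L s0)) (at_right s0)"
    using tendsto_cong[OF evR] by simp
  have R0: "R s0 = ennreal (c s0 * i / L s0)"
    unfolding i_def by (rule Rform[OF Ifin Lpos s])
  have "Limsup (at_right s0) (\<lambda>s. S_const s \<Omega>) \<le> Limsup (at_right s0) R"
    by (intro Limsup_mono always_eventually allI SR)
  also have "\<dots> = R s0"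
    using Rlim R0 by (intro lim_imp_Limsup) auto
  finally show ?thesis unfolding R_def L_def .
qed



lemma Qform_cong_AE:
  fixes v v' :: "'a::euclidean_space \<Rightarrow> real"
  assumes ae: "AE x in lborel. v x = v' x"
  shows "Qform s \<Omega> v = Qform s \<Omega> v'"
proof -
  have K: "Kin s \<Omega> v x = Kin s \<Omega> v' x" if vx: "v x = v' x" for x
    unfolding Kin_def
  proof (rule nn_integral_cong_AE)
    show "AE y in lborel. ennreal ((v x - v y)\<^sup>2 / norm (x - y) powr (real DIM('a) + 2 * s)) * indicator \<Omega> y =
          ennreal ((v' x - v' y)\<^sup>2 / norm (x - y) powr (real DIM('a) + 2 * s)) * indicator \<Omega> y"
      using ae by eventually_elim (simp add: vx)
  qed
  have "AE x in lborel. Kin s \<Omega> v x * indicator \<Omega> x = Kin s \<Omega> v' x * indicator \<Omega> x"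
    using ae by eventually_elim (simp add: K)
  then have "(\<integral>\<^sup>+ x. Kin s \<Omega> v x * indicator \<Omega> x \<partial>lborel) = (\<integral>\<^sup>+ x. Kin s \<Omega> v' x * indicator \<Omega> x \<partial>lborel)"
    by (rule nn_integral_cong_AE)
  then show ?thesis unfolding Qform_lborel by simp
qed

lemma sq_split:
  fixes X Y e :: real
  assumes "e > 0"
  shows "(X + Y)\<^sup>2 \<le> (1 + e) * X\<^sup>2 + (1 + 1/e) * Y\<^sup>2"
proof -
  have "e * ((1 + e) * X\<^sup>2 + (1 + 1/e) * Y\<^sup>2 - (X + Y)\<^sup>2) = (e * X - Y)\<^sup>2"
    using assms by (simp add: field_simps power2_eq_square)
  then have "0 \<le> e * ((1 + e) * X\<^sup>2 + (1 + 1/e) * Y\<^sup>2 - (X + Y)\<^sup>2)" by simp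
  then have "0 \<le> (1 + e) * X\<^sup>2 + (1 + 1/e) * Y\<^sup>2 - (X + Y)\<^sup>2"
    using assms by (simp add: zero_le_mult_iff)
  then show ?thesis by simp
qed

lemma Qform_subadd:
  fixes a b :: "'a::euclidean_space \<Rightarrow> real"
  assumes [measurable]: "a \<in> borel_measurable borel" "b \<in> borel_measurable borel" "\<Omega> \<in> sets borel"
    and e: "e > 0"
  shows "Qform s \<Omega> (\<lambda>x. a x + b x) \<le> ennreal (1 + e) * Qform s \<Omega> a + ennreal (1 + 1/e) * Qform s \<Omega> b"
proof -
  define k where "k x y = norm (x - y) powr (real DIM('a) + 2 * s)" for x y :: 'a
  have pt: "ennreal (((a x + b x) - (a y + b y))\<^sup>2 / k x y) * indicator \<Omega> y
      \<le> ennreal (1 + e) * (ennreal ((a x - a y)\<^sup>2 / k x y) * indicator \<Omega> y)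
       + ennreal (1 + 1/e) * (ennreal ((b x - b y)\<^sup>2 / k x y) * indicator \<Omega> y)" for x y
  proof (cases "y \<in> \<Omega>")
    case True
    have kp: "0 \<le> k x y" by (simp add: k_def)
    have "((a x + b x) - (a y + b y))\<^sup>2 = ((a x - a y) + (b x - b y))\<^sup>2" by (simp add: algebra_simps)
    also have "\<dots> \<le> (1 + e) * (a x - a y)\<^sup>2 + (1 + 1/e) * (b x - b y)\<^sup>2" by (rule sq_split[OF e])
    finally have "((a x + b x) - (a y + b y))\<^sup>2 / k x y \<le> ((1 + e) * (a x - a y)\<^sup>2 + (1 + 1/e) * (b x - b y)\<^sup>2) / k x y"
      using kp by (intro divide_right_mono)
    also have "\<dots> = (1 + e) * ((a x - a y)\<^sup>2 / k x y) + (1 + 1/e) * ((b x - b y)\<^sup>2 / k x y)"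
      by (simp add: add_divide_distrib)
    finally have "ennreal (((a x + b x) - (a y + b y))\<^sup>2 / k x y) \<le> ennreal ((1 + e) * ((a x - a y)\<^sup>2 / k x y) + (1 + 1/e) * ((b x - b y)\<^sup>2 / k x y))"
      by (rule ennreal_leI)
    also have "\<dots> = ennreal (1 + e) * ennreal ((a x - a y)\<^sup>2 / k x y) + ennreal (1 + 1/e) * ennreal ((b x - b y)\<^sup>2 / k x y)"
      using e kp by (simp add: ennreal_plus[symmetric] ennreal_mult[symmetric] del: ennreal_plus)
    finally show ?thesis using True by simp
  qed simp
  have Kle: "Kin s \<Omega> (\<lambda>x. a x + b x) x \<le> ennreal (1 + e) * Kin s \<Omega> a x + ennreal (1 + 1/e) * Kin s \<Omega> b x" for x
  proof -
    have "Kin s \<Omega> (\<lambda>x. a x + b x) x \<le> (\<integral>\<^sup>+ y. ennreal (1 + e) * (ennreal ((a x - a y)\<^sup>2 / k x y) * indicator \<Omega> y)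
       + ennreal (1 + 1/e) * (ennreal ((b x - b y)\<^sup>2 / k x y) * indicator \<Omega> y) \<partial>lborel)"
      unfolding Kin_def k_def[symmetric] by (intro nn_integral_mono pt)
    also have "\<dots> = ennreal (1 + e) * Kin s \<Omega> a x + ennreal (1 + 1/e) * Kin s \<Omega> b x"
    proof -
      have m1: "(\<lambda>y. ennreal ((a x - a y)\<^sup>2 / k x y) * indicator \<Omega> y) \<in> borel_measurable lborel"
        unfolding k_def by measurable
      have m2: "(\<lambda>y. ennreal ((b x - b y)\<^sup>2 / k x y) * indicator \<Omega> y) \<in> borel_measurable lborel"
        unfolding k_def by measurable
      have "(\<integral>\<^sup>+ y. ennreal (1 + e) * (ennreal ((a x - a y)\<^sup>2 / k x y) * indicator \<Omega> y)
       + ennreal (1 + 1/e) * (ennreal ((b x - b y)\<^sup>2 / k x y) * indicator \<Omega> y) \<partial>lborel)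
       = (\<integral>\<^sup>+ y. ennreal (1 + e) * (ennreal ((a x - a y)\<^sup>2 / k x y) * indicator \<Omega> y) \<partial>lborel)
       + (\<integral>\<^sup>+ y. ennreal (1 + 1/e) * (ennreal ((b x - b y)\<^sup>2 / k x y) * indicator \<Omega> y) \<partial>lborel)"
        by (rule nn_integral_add; intro borel_measurable_times_ennreal borel_measurable_const m1 m2)
      also have "\<dots> = ennreal (1 + e) * Kin s \<Omega> a x + ennreal (1 + 1/e) * Kin s \<Omega> b x"
        unfolding nn_integral_cmult[OF m1] nn_integral_cmult[OF m2] unfolding Kin_def k_def ..
      finally show ?thesis .
    qed
    finally show ?thesis .
  qed
  have "(\<integral>\<^sup>+ x. Kin s \<Omega> (\<lambda>x. a x + b x) x * indicator \<Omega> x \<partial>lborel)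
     \<le> (\<integral>\<^sup>+ x. ennreal (1 + e) * (Kin s \<Omega> a x * indicator \<Omega> x) + ennreal (1 + 1/e) * (Kin s \<Omega> b x * indicator \<Omega> x) \<partial>lborel)"
  proof (intro nn_integral_mono)
    fix x show "Kin s \<Omega> (\<lambda>x. a x + b x) x * indicator \<Omega> x
      \<le> ennreal (1 + e) * (Kin s \<Omega> a x * indicator \<Omega> x) + ennreal (1 + 1/e) * (Kin s \<Omega> b x * indicator \<Omega> x)"
      using Kle[of x] by (cases "x \<in> \<Omega>") simp_all
  qed
  also have "\<dots> = ennreal (1 + e) * (\<integral>\<^sup>+ x. Kin s \<Omega> a x * indicator \<Omega> x \<partial>lborel)
      + ennreal (1 + 1/e) * (\<integral>\<^sup>+ x. Kin s \<Omega> b x * indicator \<Omega> x \<partial>lborel)"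
  proof -
    have m1: "(\<lambda>x. Kin s \<Omega> a x * indicator \<Omega> x) \<in> borel_measurable lborel" by measurable
    have m2: "(\<lambda>x. Kin s \<Omega> b x * indicator \<Omega> x) \<in> borel_measurable lborel" by measurable
    show ?thesis
      unfolding nn_integral_cmult[OF m1, symmetric] nn_integral_cmult[OF m2, symmetric]
      by (rule nn_integral_add; intro borel_measurable_times_ennreal borel_measurable_const m1 m2)
  qed
  finally have I: "(\<integral>\<^sup>+ x. Kin s \<Omega> (\<lambda>x. a x + b x) x * indicator \<Omega> x \<partial>lborel)
     \<le> ennreal (1 + e) * (\<integral>\<^sup>+ x. Kin s \<Omega> a x * indicator \<Omega> x \<partial>lborel)
      + ennreal (1 + 1/e) * (\<integral>\<^sup>+ x. Kin s \<Omega> b x * indicator \<Omega> x \<partial>lborel)" .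
  show ?thesis unfolding Qform_lborel
    using mult_left_mono[OF I, of "ennreal (c_const DIM('a) s / 2)"]
    by (simp add: distrib_left mult.left_commute)
qed


lemma ennreal_ind_mult: "ennreal (a * indicator A x) = ennreal a * indicator A x"
  by (cases "x \<in> A") auto

lemma L2_AE_subseq:
  fixes f :: "nat \<Rightarrow> 'a::euclidean_space \<Rightarrow> real" and u :: "'a \<Rightarrow> real"
  assumes mf[measurable]: "\<And>n. f n \<in> borel_measurable lebesgue" "u \<in> borel_measurable lebesgue" "\<Omega> \<in> sets lebesgue"
    and lim: "(\<lambda>n. \<integral>\<^sup>+ x. ennreal ((f n x - u x)\<^sup>2) * indicator \<Omega> x \<partial>lebesgue) \<longlonglongrightarrow> 0"
  shows "\<exists>r. strict_mono r \<and> (AE x in lebesgue. x \<in> \<Omega> \<longrightarrow> (\<lambda>n. f (r n) x) \<longlonglongrightarrow> u x)"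
proof -
  define A where "A n = (\<integral>\<^sup>+ x. ennreal ((f n x - u x)\<^sup>2) * indicator \<Omega> x \<partial>lebesgue)" for n
  have "\<forall>\<^sub>F n in sequentially. A n < 1"
    using order_tendstoD(2)[OF lim[folded A_def]] by simp
  then obtain N0 where N0: "\<And>n. n \<ge> N0 \<Longrightarrow> A n < 1"
    by (auto simp: eventually_sequentially)
  define v where "v n x = (f (n + N0) x - u x)\<^sup>2 * indicator \<Omega> x" for n x
  have vm: "v n \<in> borel_measurable lebesgue" for n unfolding v_def by measurable
  have vnn: "0 \<le> v n x" for n x by (simp add: v_def)
  have vA: "(\<integral>\<^sup>+ x. ennreal (v n x) \<partial>lebesgue) = A (n + N0)" for n
    unfolding v_def A_def ennreal_ind_mult ..
  have vint: "integrable lebesgue (v n)" for n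
  proof (rule integrableI_nonneg[OF vm])
    show "AE x in lebesgue. 0 \<le> v n x" by (simp add: vnn)
    show "(\<integral>\<^sup>+ x. ennreal (v n x) \<partial>lebesgue) < \<infinity>"
      unfolding vA using N0[of "n + N0"] by (simp add: order_less_trans)
  qed
  have int_eq: "(\<integral>x. norm (v n x) \<partial>lebesgue) = enn2real (A (n + N0))" for n
  proof -
    have "ennreal (\<integral>x. v n x \<partial>lebesgue) = A (n + N0)"
      using nn_integral_eq_integral[OF vint] vnn vA by simp
    moreover have "0 \<le> (\<integral>x. v n x \<partial>lebesgue)" using vnn by simp
    moreover have "(\<lambda>x. norm (v n x)) = v n" by (rule ext) (simp add: vnn)
    ultimately show ?thesis by (metis enn2real_ennreal)
  qed
  have "(\<lambda>n. A (n + N0)) \<longlonglongrightarrow> ennreal 0"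
    using LIMSEQ_ignore_initial_segment[OF lim[folded A_def], of N0] by simp
  then have "(\<lambda>n. enn2real (A (n + N0))) \<longlonglongrightarrow> 0"
    by (rule tendsto_enn2real) simp
  then have "(\<lambda>n. (\<integral>x. norm (v n x) \<partial>lebesgue)) \<longlonglongrightarrow> 0"
    unfolding int_eq .
  from tendsto_L1_AE_subseq[OF vint this]
  obtain r where r: "strict_mono r" "AE x in lebesgue. (\<lambda>n. v (r n) x) \<longlonglongrightarrow> 0" by blast
  define r' where "r' n = r n + N0" for n
  have "strict_mono r'" using r(1) by (simp add: strict_mono_def r'_def)
  moreover have "AE x in lebesgue. x \<in> \<Omega> \<longrightarrow> (\<lambda>n. f (r' n) x) \<longlonglongrightarrow> u x"
    using r(2)
  proof eventually_elim
    fix x assume conv: "(\<lambda>n. v (r n) x) \<longlonglongrightarrow> 0"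
    show "x \<in> \<Omega> \<longrightarrow> (\<lambda>n. f (r' n) x) \<longlonglongrightarrow> u x"
    proof
      assume x: "x \<in> \<Omega>"
      have "(\<lambda>n. sqrt (v (r n) x)) \<longlonglongrightarrow> sqrt 0"
        by (rule tendsto_real_sqrt[OF conv])
      moreover have "sqrt (v (r n) x) = \<bar>f (r' n) x - u x\<bar>" for n
        using x by (simp add: v_def r'_def)
      ultimately have "(\<lambda>n. \<bar>f (r' n) x - u x\<bar>) \<longlonglongrightarrow> 0" by simp
      then have "(\<lambda>n. f (r' n) x - u x) \<longlonglongrightarrow> 0" by (simp only: tendsto_rabs_zero_iff)
      then show "(\<lambda>n. f (r' n) x) \<longlonglongrightarrow> u x" by (rule LIM_zero_cancel)
    qed
  qed
  ultimately show ?thesis by blast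
qed

lemma Lp_fatou:
  fixes f :: "nat \<Rightarrow> 'a::euclidean_space \<Rightarrow> real" and u :: "'a \<Rightarrow> real"
  assumes mf[measurable]: "\<And>n. f n \<in> borel_measurable lebesgue" "\<Omega> \<in> sets lebesgue" and p: "p > 0"
    and ae: "AE x in lebesgue. x \<in> \<Omega> \<longrightarrow> (\<lambda>n. f n x) \<longlonglongrightarrow> u x"
  shows "(\<integral>\<^sup>+ x. ennreal (\<bar>u x\<bar> powr p) * indicator \<Omega> x \<partial>lebesgue)
     \<le> liminf (\<lambda>n. \<integral>\<^sup>+ x. ennreal (\<bar>f n x\<bar> powr p) * indicator \<Omega> x \<partial>lebesgue)"
proof -
  have "(\<integral>\<^sup>+ x. ennreal (\<bar>u x\<bar> powr p) * indicator \<Omega> x \<partial>lebesgue)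
     = (\<integral>\<^sup>+ x. liminf (\<lambda>n. ennreal (\<bar>f n x\<bar> powr p) * indicator \<Omega> x) \<partial>lebesgue)"
  proof (rule nn_integral_cong_AE)
    show "AE x in lebesgue. ennreal (\<bar>u x\<bar> powr p) * indicator \<Omega> x = liminf (\<lambda>n. ennreal (\<bar>f n x\<bar> powr p) * indicator \<Omega> x)"
      using ae
    proof eventually_elim
      fix x assume conv: "x \<in> \<Omega> \<longrightarrow> (\<lambda>n. f n x) \<longlonglongrightarrow> u x"
      show "ennreal (\<bar>u x\<bar> powr p) * indicator \<Omega> x = liminf (\<lambda>n. ennreal (\<bar>f n x\<bar> powr p) * indicator \<Omega> x)"
      proof (cases "x \<in> \<Omega>")
        case True
        have "(\<lambda>n. \<bar>f n x\<bar> powr p) \<longlonglongrightarrow> \<bar>u x\<bar> powr p"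
          using conv True p by (intro tendsto_powr' tendsto_rabs tendsto_const) auto
        then have "(\<lambda>n. ennreal (\<bar>f n x\<bar> powr p)) \<longlonglongrightarrow> ennreal (\<bar>u x\<bar> powr p)"
          by (rule tendsto_ennrealI)
        then have "liminf (\<lambda>n. ennreal (\<bar>f n x\<bar> powr p)) = ennreal (\<bar>u x\<bar> powr p)"
          by (intro lim_imp_Liminf) auto
        then show ?thesis using True by simp
      next
        case False
        then show ?thesis by (simp add: Liminf_const)
      qed
    qed
  qed
  also have "\<dots> \<le> liminf (\<lambda>n. \<integral>\<^sup>+ x. ennreal (\<bar>f n x\<bar> powr p) * indicator \<Omega> x \<partial>lebesgue)"
    by (rule nn_integral_liminf) measurable
  finally show ?thesis .
qed

lemma ev_nontriv:
  fixes f :: "nat \<Rightarrow> 'a::euclidean_space \<Rightarrow> real" and u :: "'a \<Rightarrow> real"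
  assumes mf[measurable]: "u \<in> borel_measurable lebesgue" "\<Omega> \<in> sets lebesgue"
    and nt: "\<not> (AE x in lebesgue. x \<in> \<Omega> \<longrightarrow> u x = 0)"
    and lim: "(\<lambda>n. \<integral>\<^sup>+ x. ennreal ((f n x - u x)\<^sup>2) * indicator \<Omega> x \<partial>lebesgue) \<longlonglongrightarrow> 0"
  shows "\<forall>\<^sub>F n in sequentially. \<not> (AE x in lebesgue. x \<in> \<Omega> \<longrightarrow> f n x = 0)"
proof -
  define U where "U = (\<integral>\<^sup>+ x. ennreal ((u x)\<^sup>2) * indicator \<Omega> x \<partial>lebesgue)"
  have "U \<noteq> 0"
  proof
    assume "U = 0"
    then have "AE x in lebesgue. ennreal ((u x)\<^sup>2) * indicator \<Omega> x = 0"
      unfolding U_def by (subst (asm) nn_integral_0_iff_AE) measurable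
    then have "AE x in lebesgue. x \<in> \<Omega> \<longrightarrow> u x = 0"
      by eventually_elim (auto simp: indicator_def)
    then show False using nt by simp
  qed
  then have "0 < U" by (simp add: zero_less_iff_neq_zero)
  from order_tendstoD(2)[OF lim this]
  show ?thesis
  proof eventually_elim
    fix n assume less: "(\<integral>\<^sup>+ x. ennreal ((f n x - u x)\<^sup>2) * indicator \<Omega> x \<partial>lebesgue) < U"
    show "\<not> (AE x in lebesgue. x \<in> \<Omega> \<longrightarrow> f n x = 0)"
    proof
      assume "AE x in lebesgue. x \<in> \<Omega> \<longrightarrow> f n x = 0"
      then have "(\<integral>\<^sup>+ x. ennreal ((f n x - u x)\<^sup>2) * indicator \<Omega> x \<partial>lebesgue) = U"
        unfolding U_def by (intro nn_integral_cong_AE) (auto elim!: eventually_mono simp: indicator_def)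
      then show False using less by simp
    qed
  qed
qed

lemma cc_P_finite:
  fixes \<phi> :: "'a::euclidean_space \<Rightarrow> real"
  assumes cc: "Cc_inf \<Omega> \<phi>" and bd: "bounded \<Omega>" and op: "open \<Omega>" and p: "0 \<le> p"
  shows "(\<integral>\<^sup>+ x. ennreal (\<bar>\<phi> x\<bar> powr p) * indicator \<Omega> x \<partial>lebesgue) < \<infinity>"
proof -
  obtain M where M: "M \<ge> 0" "\<And>x. \<bar>\<phi> x\<bar> \<le> M" using cc_bounded[OF cc] by blast
  have "(\<integral>\<^sup>+ x. ennreal (\<bar>\<phi> x\<bar> powr p) * indicator \<Omega> x \<partial>lebesgue)
      \<le> (\<integral>\<^sup>+ x. ennreal (M powr p) * indicator \<Omega> x \<partial>lborel)"
    unfolding nn_integral_completion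
  proof (intro nn_integral_mono)
    fix x
    have "\<bar>\<phi> x\<bar> powr p \<le> M powr p" using M p by (intro powr_mono2) auto
    then show "ennreal (\<bar>\<phi> x\<bar> powr p) * indicator \<Omega> x \<le> ennreal (M powr p) * indicator \<Omega> x"
      by (cases "x \<in> \<Omega>") (auto intro: ennreal_leI)
  qed
  also have "\<dots> = ennreal (M powr p) * emeasure lborel \<Omega>"
    using op by (intro nn_integral_cmult_indicator) simp
  also have "\<dots> < \<infinity>"
    using emeasure_bounded_finite[OF bd] by (simp add: ennreal_mult_less_top)
  finally show ?thesis .
qed



lemma ratio_le:
  fixes Q :: ennreal
  assumes "Q \<le> ennreal X" "0 \<le> X" "0 < Y" "Y \<le> Lv"
  shows "Q / ennreal Lv \<le> ennreal (X / Y)"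
proof -
  have "Q / ennreal Lv \<le> ennreal X / ennreal Lv" by (rule divide_right_mono_ennreal[OF assms(1)])
  also have "\<dots> = ennreal (X / Lv)" using assms by (intro divide_ennreal) auto
  also have "\<dots> \<le> ennreal (X / Y)" using assms by (intro ennreal_leI divide_left_mono) auto
  finally show ?thesis .
qed

lemma ev_subseq:
  assumes "\<forall>\<^sub>F n in sequentially. P n" "strict_mono r"
  shows "\<forall>\<^sub>F n in sequentially. P (r n)"
proof -
  obtain N where N: "\<And>n. n \<ge> N \<Longrightarrow> P n" using assms(1) by (auto simp: eventually_sequentially)
  show ?thesis unfolding eventually_sequentially
    using N seq_suble[OF assms(2)] le_trans by blast
qed

lemma key_bound:
  fixes \<psi> :: "'a::euclidean_space \<Rightarrow> real" and LS :: ennreal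
  assumes HA: "LS \<le> Qform s0 \<Omega> \<psi> / ennreal (Lp_norm_sq p \<Omega> \<psi>)"
    and Pfin: "(\<integral>\<^sup>+ x. ennreal (\<bar>\<psi> x\<bar> powr p) * indicator \<Omega> x \<partial>lebesgue) < \<infinity>"
    and Pgt: "ennreal Y0 < (\<integral>\<^sup>+ x. ennreal (\<bar>\<psi> x\<bar> powr p) * indicator \<Omega> x \<partial>lebesgue)"
    and Qle: "Qform s0 \<Omega> \<psi> \<le> ennreal X" and X: "0 \<le> X" and Y0: "0 < Y0" and p: "0 < p"
  shows "LS \<le> ennreal (X / Y0 powr (2 / p))"
proof -
  define P where "P = (\<integral>\<^sup>+ x. ennreal (\<bar>\<psi> x\<bar> powr p) * indicator \<Omega> x \<partial>lebesgue)"
  have "P = ennreal (enn2real P)" using Pfin by (simp add: P_def ennreal_enn2real)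
  then have "ennreal Y0 < ennreal (enn2real P)" using Pgt by (simp add: P_def)
  then have "Y0 < enn2real P" using Y0 by (simp add: ennreal_less_iff)
  then have "Y0 powr (2 / p) \<le> enn2real P powr (2 / p)"
    using Y0 p by (intro powr_mono2) auto
  also have "enn2real P powr (2 / p) = Lp_norm_sq p \<Omega> \<psi>"
    by (simp add: Lp_norm_sq_def P_def)
  finally have "Y0 powr (2 / p) \<le> Lp_norm_sq p \<Omega> \<psi>" .
  then have "Qform s0 \<Omega> \<psi> / ennreal (Lp_norm_sq p \<Omega> \<psi>) \<le> ennreal (X / Y0 powr (2 / p))"
    using Qle X Y0 by (intro ratio_le) auto
  then show ?thesis using HA by (rule order_trans[rotated])
qed


lemma partB_single:
  fixes u :: "'a::euclidean_space \<Rightarrow> real" and LS :: ennreal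
  assumes HA: "\<And>\<psi>. Cc_inf \<Omega> \<psi> \<Longrightarrow> \<not> (AE x in lebesgue. x \<in> \<Omega> \<longrightarrow> \<psi> x = 0) \<Longrightarrow>
        LS \<le> Qform s0 \<Omega> \<psi> / ennreal (Lp_norm_sq p \<Omega> \<psi>)"
    and uH: "u \<in> Hs0 s0 \<Omega>" and nt: "\<not> (AE x in lebesgue. x \<in> \<Omega> \<longrightarrow> u x = 0)"
    and bd: "bounded \<Omega>" and op: "open \<Omega>" and p: "0 < p"
  shows "LS \<le> Qform s0 \<Omega> u / ennreal (Lp_norm_sq p \<Omega> u)"
proof -
  have um[measurable]: "u \<in> borel_measurable lebesgue" using uH by (simp add: Hs0_def)
  obtain \<phi> where cc: "\<And>n. Cc_inf \<Omega> (\<phi> n)"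
    and E: "(\<lambda>n. (\<integral>\<^sup>+ x. ennreal ((\<phi> n x - u x)\<^sup>2) * indicator \<Omega> x \<partial>lebesgue)
              + Qform s0 \<Omega> (\<lambda>x. \<phi> n x - u x)) \<longlonglongrightarrow> 0"
    using uH unfolding Hs0_def by blast
  define A where "A n = (\<integral>\<^sup>+ x. ennreal ((\<phi> n x - u x)\<^sup>2) * indicator \<Omega> x \<partial>lebesgue)" for n
  define B where "B n = Qform s0 \<Omega> (\<lambda>x. \<phi> n x - u x)" for n
  have A0: "A \<longlonglongrightarrow> 0"
    by (rule tendsto_sandwich[of "\<lambda>_. 0" _ _ "\<lambda>n. A n + B n"])
       (use E in \<open>auto simp: A_def B_def intro: add_increasing2\<close>)
  have B0: "B \<longlonglongrightarrow> 0"
    by (rule tendsto_sandwich[of "\<lambda>_. 0" _ _ "\<lambda>n. A n + B n"])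
       (use E in \<open>auto simp: A_def B_def intro: add_increasing\<close>)
  have \<phi>b[measurable]: "\<phi> n \<in> borel_measurable borel" for n
    by (rule borel_measurable_continuous_onI[OF cc_cont[OF cc]])
  have \<phi>m[measurable]: "\<phi> n \<in> borel_measurable lebesgue" for n
    by (rule measurable_completion) simp
  have \<Omega>b[measurable]: "\<Omega> \<in> sets borel" using op by simp
  have \<Omega>m[measurable]: "\<Omega> \<in> sets lebesgue" using op by simp
  obtain u' where u'b: "u' \<in> borel_measurable lborel" and uu': "AE x in lborel. u x = u' x"
    using completion_ex_borel_measurable_real[OF um] by blast
  have u'm[measurable]: "u' \<in> borel_measurable borel" using u'b by simp
  define q where "q = Qform s0 \<Omega> u"
  have qu': "Qform s0 \<Omega> u' = q" unfolding q_def
    by (rule Qform_cong_AE) (use uu' in \<open>auto elim: eventually_mono\<close>)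
  have Bu': "Qform s0 \<Omega> (\<lambda>x. \<phi> n x - u' x) = B n" for n unfolding B_def
    by (rule Qform_cong_AE) (use uu' in \<open>auto elim: eventually_mono\<close>)
  have Qphi: "Qform s0 \<Omega> (\<phi> n) \<le> ennreal (1 + e) * q + ennreal (1 + 1/e) * B n" if e: "e > 0" for e n
  proof -
    have "\<phi> n = (\<lambda>x. u' x + (\<phi> n x - u' x))" by (rule ext) simp
    then have "Qform s0 \<Omega> (\<phi> n) = Qform s0 \<Omega> (\<lambda>x. u' x + (\<phi> n x - u' x))" by simp
    also have "\<dots> \<le> ennreal (1 + e) * Qform s0 \<Omega> u' + ennreal (1 + 1/e) * Qform s0 \<Omega> (\<lambda>x. \<phi> n x - u' x)"
      by (rule Qform_subadd) (use e in measurable)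
    finally show ?thesis unfolding qu' Bu' .
  qed
  define P where "P v = (\<integral>\<^sup>+ x. ennreal (\<bar>v x\<bar> powr p) * indicator \<Omega> x \<partial>lebesgue)" for v :: "'a \<Rightarrow> real"
  have LpP: "Lp_norm_sq p \<Omega> v = enn2real (P v) powr (2 / p)" for v
    unfolding Lp_norm_sq_def P_def ..
  have Pfin: "P (\<phi> n) < \<infinity>" for n
    unfolding P_def by (rule cc_P_finite[OF cc bd op]) (use p in simp)
  from L2_AE_subseq[OF \<phi>m um \<Omega>m A0[unfolded A_def]]
  obtain r where r: "strict_mono r" and ae: "AE x in lebesgue. x \<in> \<Omega> \<longrightarrow> (\<lambda>n. \<phi> (r n) x) \<longlonglongrightarrow> u x"
    by blast
  have fatou: "P u \<le> liminf (\<lambda>n. P (\<phi> (r n)))"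
    unfolding P_def by (rule Lp_fatou[OF _ \<Omega>m p ae]) simp
  have evnt: "\<forall>\<^sub>F n in sequentially. \<not> (AE x in lebesgue. x \<in> \<Omega> \<longrightarrow> \<phi> (r n) x = 0)"
    by (rule ev_subseq[OF ev_nontriv[OF um \<Omega>m nt A0[unfolded A_def]] r])
  have evQ: "\<forall>\<^sub>F n in sequentially. Qform s0 \<Omega> (\<phi> (r n)) \<le> ennreal (1 + e) * q + ennreal \<delta>"
    if e: "e > 0" and d: "\<delta> > 0" for e \<delta>
  proof -
    have "(\<lambda>n. ennreal (1 + 1/e) * B n) \<longlonglongrightarrow> ennreal (1 + 1/e) * 0"
      by (rule ennreal_tendsto_cmult[OF _ B0]) simp
    then have "\<forall>\<^sub>F n in sequentially. ennreal (1 + 1/e) * B n < ennreal \<delta>"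
      using d by (intro order_tendstoD(2)) auto
    then have "\<forall>\<^sub>F n in sequentially. Qform s0 \<Omega> (\<phi> n) \<le> ennreal (1 + e) * q + ennreal \<delta>"
    proof eventually_elim
      fix n assume "ennreal (1 + 1/e) * B n < ennreal \<delta>"
      then show "Qform s0 \<Omega> (\<phi> n) \<le> ennreal (1 + e) * q + ennreal \<delta>"
        using Qphi[OF e, of n] by (meson add_left_mono less_imp_le order_trans)
    qed
    then show ?thesis by (rule ev_subseq[OF _ r])
  qed
  show ?thesis
  proof (cases "q = top")
    case True
    then show ?thesis by (simp add: q_def ennreal_top_divide)
  next
    case False
    define qr where "qr = enn2real q"
    have qr: "q = ennreal qr" "0 \<le> qr" using False by (auto simp: qr_def ennreal_enn2real top.not_eq_extremum)
    have ev_bound: "LS \<le> ennreal (((1 + e) * qr + \<delta>) / Y0 powr (2 / p))"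
      if e: "e > 0" and d: "\<delta> > 0" and Y0: "0 < Y0" and evP: "\<forall>\<^sub>F n in sequentially. ennreal Y0 < P (\<phi> (r n))"
      for e \<delta> Y0
    proof -
      from eventually_happens'[OF _ eventually_conj[OF evnt eventually_conj[OF evQ[OF e d] evP]]]
      obtain n where n: "\<not> (AE x in lebesgue. x \<in> \<Omega> \<longrightarrow> \<phi> (r n) x = 0)"
        "Qform s0 \<Omega> (\<phi> (r n)) \<le> ennreal (1 + e) * q + ennreal \<delta>" "ennreal Y0 < P (\<phi> (r n))"
        by auto
      have Qle: "Qform s0 \<Omega> (\<phi> (r n)) \<le> ennreal ((1 + e) * qr + \<delta>)"
        using n(2) qr e d by (simp add: ennreal_plus ennreal_mult)
      show ?thesis
        by (rule key_bound[OF HA[OF cc n(1)] _ _ Qle]) (use Pfin n(3) e d qr Y0 p in \<open>auto simp: P_def\<close>)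
    qed
    show ?thesis
    proof (cases "P u = top")
      case True
      then have Lp0: "Lp_norm_sq p \<Omega> u = 0" by (simp add: LpP)
      show ?thesis
      proof (cases "q = 0")
        case False
        then show ?thesis using Lp0 unfolding q_def by (simp add: ennreal_divide_zero)
      next
        case True
        have "LS \<le> 0"
        proof (rule ennreal_le_epsilon)
          fix \<delta> :: real assume d: "0 < \<delta>"
          have "ennreal 1 < liminf (\<lambda>n. P (\<phi> (r n)))"
            using fatou \<open>P u = top\<close> by (simp add: top_unique)
          then have evP: "\<forall>\<^sub>F n in sequentially. ennreal 1 < P (\<phi> (r n))"
            by (rule less_LiminfD)
          have "LS \<le> ennreal (((1 + 1) * qr + \<delta>) / 1 powr (2 / p))"
            by (rule ev_bound[OF _ d _ evP]) auto
          also have "\<dots> = ennreal \<delta>" using True qr by simp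
          finally show "LS \<le> 0 + ennreal \<delta>" by simp
        qed
        then show ?thesis by simp
      qed
    next
      case False
      define a where "a = enn2real (P u)"
      have Pu: "P u = ennreal a" using False by (simp add: a_def ennreal_enn2real top.not_eq_extremum)
      have "P u \<noteq> 0"
      proof
        assume "P u = 0"
        then have "AE x in lebesgue. ennreal (\<bar>u x\<bar> powr p) * indicator \<Omega> x = 0"
          unfolding P_def by (subst (asm) nn_integral_0_iff_AE) measurable
        then have "AE x in lebesgue. x \<in> \<Omega> \<longrightarrow> u x = 0"
          by eventually_elim (auto simp: indicator_def)
        then show False using nt by simp
      qed
      then have apos: "0 < a" unfolding a_def using False
        by (simp add: enn2real_positive_iff zero_less_iff_neq_zero top.not_eq_extremum)
      have RHS: "Qform s0 \<Omega> u / ennreal (Lp_norm_sq p \<Omega> u) = ennreal (qr / a powr (2 / p))"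
        unfolding LpP a_def[symmetric] q_def[symmetric] qr(1) using apos qr(2) by (simp add: divide_ennreal)
      define g where "g e = ((1 + e) * qr + e) / (a * (1 - e)) powr (2 / p)" for e
      have LSg: "LS \<le> ennreal (g e)" if e: "0 < e" "e < 1" for e
      proof -
        have "ennreal (a * (1 - e)) < ennreal a" using e apos by (simp add: ennreal_less_iff)
        also have "\<dots> \<le> liminf (\<lambda>n. P (\<phi> (r n)))" using fatou Pu by simp
        finally have evP: "\<forall>\<^sub>F n in sequentially. ennreal (a * (1 - e)) < P (\<phi> (r n))"
          by (rule less_LiminfD)
        show ?thesis unfolding g_def
          by (rule ev_bound[OF e(1) e(1) _ evP]) (use e apos in simp)
      qed
      have LSfin: "LS < top"
        using LSg[of "1/2"] by (simp add: order_le_less_trans)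
      define LSr where "LSr = enn2real LS"
      have LSe: "LS = ennreal LSr" "0 \<le> LSr" using LSfin by (auto simp: LSr_def ennreal_enn2real)
      have gnn: "0 \<le> g e" if "0 < e" "e < 1" for e
        using that qr apos by (simp add: g_def)
      have ev: "\<forall>\<^sub>F e in at_right 0. LSr \<le> g e"
      proof (rule eventually_at_rightI[of 0 1])
        fix e :: real assume "e \<in> {0<..<1}"
        then have e: "0 < e" "e < 1" by auto
        have "ennreal LSr \<le> ennreal (g e)" using LSg[OF e] LSe by simp
        then show "LSr \<le> g e" using gnn[OF e] by (simp add: ennreal_le_iff)
      qed simp
      have glim: "(g \<longlongrightarrow> ((1 + 0) * qr + 0) / (a * (1 - 0)) powr (2 / p)) (at_right 0)"
        unfolding g_def using apos
        by (intro tendsto_intros tendsto_ident_at) auto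
      have "LSr \<le> qr / a powr (2 / p)"
        using tendsto_le[OF _ glim tendsto_const ev] by simp
      then have "LS \<le> ennreal (qr / a powr (2 / p))" using LSe by (simp add: ennreal_leI)
      then show ?thesis unfolding RHS .
    qed
  qed
qed


theorem lemma3p3:
  fixes \<Omega> :: "'a::euclidean_space set" and s0 :: real
  assumes "DIM('a) \<ge> 2"
    and "bounded \<Omega>" and "lipschitz_open_set \<Omega>"
    and "1/2 \<le> s0" and "s0 < 1"
  shows "Limsup (at_right s0) (\<lambda>s. S_const s \<Omega>) \<le> S_const s0 \<Omega>"
proof -
  have op: "open \<Omega>" using assms(3) by (simp add: lipschitz_open_set_def)
  have s0pos: "0 < s0" using assms(4) by simp
  define LS where "LS = Limsup (at_right s0) (\<lambda>s. S_const s \<Omega>)"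
  have HA: "LS \<le> Qform s0 \<Omega> \<psi> / ennreal (Lp_norm_sq (crit_exp DIM('a) s0) \<Omega> \<psi>)"
    if "Cc_inf \<Omega> \<psi>" "\<not> (AE x in lebesgue. x \<in> \<Omega> \<longrightarrow> \<psi> x = 0)" for \<psi>
    unfolding LS_def by (rule partA[OF that(1) assms(2) op assms(1) that(2) s0pos assms(5)])
  have p: "0 < crit_exp DIM('a) s0" using assms(1,5) by (simp add: crit_exp_def)
  have "LS \<le> S_const s0 \<Omega>"
    unfolding S_const_def
  proof (rule INF_greatest)
    fix u assume u: "u \<in> {u \<in> Hs0 s0 \<Omega>. \<not> (AE x in lebesgue. x \<in> \<Omega> \<longrightarrow> u x = 0)}"
    show "LS \<le> Qform s0 \<Omega> u / ennreal (Lp_norm_sq (crit_exp DIM('a) s0) \<Omega> u)"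
      by (rule partB_single[OF HA _ _ assms(2) op p]) (use u in auto)
  qed
  then show ?thesis unfolding LS_def .
qed

end
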